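(* Let $n,w$ be integers with $w>3$ and $n>2w$, and let $b\in\{n-1,n,\dots,2n-1\}$. Then there is no equitable $2$-partition of the Johnson graph $J(n,w)$ with quotient matrix $$\begin{pmatrix} w(n-w)-b & b\\ 2n-2-b & w(n-w)-2n+2+b\end{pmatrix}.$$
   Context: The Johnson graph $J(n,w)$ has as vertices the binary vectors of length $n$ with exactly $w$ ones; two vertices are adjacent iff they have exactly $w-1$ common ones (i.e. they differ by swapping a $1$ and a $0$). It is regular of degree $w(n-w)$. A $2$-partition $(C_1,C_2)$ of the vertex set into two nonempty sets (cells) is equitable with quotient matrix $S=(s_{ij})_{i,j\in\{1,2\}}$ if every vertex of $C_i$ has exactly $s_{ij}$ neighbours in $C_j$. *)

theory Defs
  imports Main
begin

text \<open>Vertices of J(n,w): binary vectors of length n with exactly w ones, represented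
  by their supports, i.e. the w-element subsets of {0..<n}.\<close>
definition johnson_vertices :: "nat \<Rightarrow> nat \<Rightarrow> nat set set" where
  "johnson_vertices n w = {A. A \<subseteq> {0..<n} \<and> card A = w}"

definition johnson_adj :: "nat \<Rightarrow> nat set \<Rightarrow> nat set \<Rightarrow> bool" where
  "johnson_adj w A B \<longleftrightarrow> card (A \<inter> B) = w - 1"

definition equitable_2partition ::
  "nat \<Rightarrow> nat \<Rightarrow> nat set set \<Rightarrow> nat set set \<Rightarrow> (nat \<Rightarrow> nat \<Rightarrow> int) \<Rightarrow> bool" where
  "equitable_2partition n w C1 C2 S \<longleftrightarrow>
     C1 \<noteq> {} \<and> C2 \<noteq> {} \<and> C1 \<inter> C2 = {} \<and> C1 \<union> C2 = johnson_vertices n w \<and>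
     (\<forall>i\<in>{1,2}. \<forall>j\<in>{1,2}.
        \<forall>x \<in> (if i = 1 then C1 else C2).
          int (card {y \<in> (if j = 1 then C1 else C2). johnson_adj w x y}) = S i j)"

end

theory Submission
  imports Defs
begin

definition JS :: "nat set \<Rightarrow> nat \<Rightarrow> nat set set" where
  "JS X r = {A. A \<subseteq> X \<and> card A = r}"

definition nb :: "nat set \<Rightarrow> nat \<Rightarrow> nat set \<Rightarrow> nat set set" where
  "nb X r A = {B \<in> JS X r. card (A \<inter> B) = r - 1}"

lemma JS_finite: "finite X \<Longrightarrow> finite (JS X r)"
  unfolding JS_def by (rule finite_subset[of _ "Pow X"]) auto

lemma nb_finite: "finite X \<Longrightarrow> finite (nb X r A)"
  unfolding nb_def using JS_finite by auto

lemma JS_ex: assumes "finite X" "r \<le> card X" shows "\<exists>A. A \<in> JS X r"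
proof -
  obtain T where "T \<subseteq> X" "card T = r" using obtain_subset_with_card_n[OF assms(2)] by blast
  thus ?thesis unfolding JS_def by blast
qed

lemma JS_mem_finite: "finite X \<Longrightarrow> A \<in> JS X r \<Longrightarrow> finite A"
  unfolding JS_def using finite_subset by auto

lemma swap_in_nb:
  assumes X: "finite X" and A: "A \<in> JS X r" and c: "c \<in> A" and d: "d \<in> X" "d \<notin> A"
  shows "insert d (A - {c}) \<in> nb X r A"
proof -
  have fA: "finite A" using JS_mem_finite[OF X A] .
  have r: "card A = r" "A \<subseteq> X" using A unfolding JS_def by auto
  have "card A > 0" using fA c by (auto simp: card_gt_0_iff)
  hence r1: "r \<ge> 1" using r(1) by simp
  have "card (insert d (A - {c})) = r" using fA c d r r1 by (simp add: card.insert_remove)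
  moreover have "A \<inter> insert d (A - {c}) = A - {c}" using d by auto
  moreover have "card (A - {c}) = r - 1" using fA c r by simp
  ultimately show ?thesis unfolding nb_def JS_def using r c d by auto
qed

lemma nb_sym: "A \<in> JS X r \<Longrightarrow> B \<in> nb X r A \<Longrightarrow> A \<in> nb X r B"
  unfolding nb_def by (simp add: Int_commute)

lemma nb_shape:
  assumes X: "finite X" and A: "A \<in> JS X r" and B: "B \<in> nb X r A" and r: "r \<ge> 1"
  shows "\<exists>c d. c \<in> A \<and> d \<in> X \<and> d \<notin> A \<and> B = insert d (A - {c})"
proof -
  have fA: "finite A" using JS_mem_finite[OF X A] .
  have BJ: "B \<in> JS X r" and cAB: "card (A \<inter> B) = r - 1" using B unfolding nb_def by auto
  have fB: "finite B" using JS_mem_finite[OF X BJ] .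
  have cA: "card A = r" "A \<subseteq> X" using A unfolding JS_def by auto
  have cB: "card B = r" "B \<subseteq> X" using BJ unfolding JS_def by auto
  have "card (A - B) = card A - card (A \<inter> B)" using fA by (simp add: card_Diff_subset_Int)
  hence c1: "card (A - B) = 1" using cA cAB r by simp
  have "card (B - A) = card B - card (B \<inter> A)" using fB by (simp add: card_Diff_subset_Int)
  hence "card (B - A) = card B - card (A \<inter> B)" by (simp add: Int_commute)
  hence c2: "card (B - A) = 1" using cB cAB r by simp
  obtain c where hc: "A - B = {c}" using c1 card_1_singletonE by blast
  obtain d where hd: "B - A = {d}" using c2 card_1_singletonE by blast
  have "B = insert d (A - {c})" using hc hd by blast
  moreover have "c \<in> A" "d \<in> X" "d \<notin> A" using hc hd cB by auto
  ultimately show ?thesis by blast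
qed

lemma nb_card:
  assumes X: "finite X" and A: "A \<in> JS X r" and r: "r \<ge> 1"
  shows "card (nb X r A) = r * (card X - r)"
proof -
  have fA: "finite A" using JS_mem_finite[OF X A] .
  have cA: "card A = r" "A \<subseteq> X" using A unfolding JS_def by auto
  let ?phi = "\<lambda>(c,d). insert d (A - {c})"
  have img: "?phi ` (A \<times> (X - A)) = nb X r A"
  proof
    show "?phi ` (A \<times> (X - A)) \<subseteq> nb X r A" using swap_in_nb[OF X A] by auto
    show "nb X r A \<subseteq> ?phi ` (A \<times> (X - A))"
    proof
      fix B assume "B \<in> nb X r A"
      from nb_shape[OF X A this r] obtain c d where "c \<in> A" "d \<in> X" "d \<notin> A" "B = insert d (A - {c})" by blast
      thus "B \<in> ?phi ` (A \<times> (X - A))" by (auto intro!: image_eqI[of _ _ "(c,d)"])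
    qed
  qed
  have inj: "inj_on ?phi (A \<times> (X - A))"
  proof (rule inj_onI, clarify)
    fix c d c' d' assume h: "c \<in> A" "d \<in> X" "d \<notin> A" "c' \<in> A" "d' \<in> X" "d' \<notin> A"
      "insert d (A - {c}) = insert d' (A - {c'})"
    have "d = d'" using h by blast
    moreover have "c = c'"
    proof (rule ccontr)
      assume "c \<noteq> c'"
      hence "c' \<in> insert d (A - {c})" using h by auto
      hence "c' \<in> insert d' (A - {c'})" using h by simp
      thus False using h by auto
    qed
    ultimately show "c = c' \<and> d = d'" by simp
  qed
  have "card (nb X r A) = card (A \<times> (X - A))" using card_image[OF inj] img by simp
  also have "\<dots> = r * (card X - r)" using cA fA X by (simp add: card_cartesian_product card_Diff_subset)
  finally show ?thesis .
qed

lemma conn: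
  assumes X: "finite X" and A: "A \<in> JS X r" and B: "B \<in> JS X r" and PA: "P A"
    and cl: "\<And>C c d. C \<in> JS X r \<Longrightarrow> c \<in> C \<Longrightarrow> d \<in> X \<Longrightarrow> d \<notin> C \<Longrightarrow> P C \<Longrightarrow> P (insert d (C - {c}))"
  shows "P B"
  using A PA
proof (induction "card (A - B)" arbitrary: A rule: less_induct)
  case less
  have fA: "finite A" using JS_mem_finite[OF X less.prems(1)] .
  have fB: "finite B" using JS_mem_finite[OF X B] .
  have cA: "card A = r" "A \<subseteq> X" using less.prems(1) unfolding JS_def by auto
  have cB: "card B = r" "B \<subseteq> X" using B unfolding JS_def by auto
  show ?case
  proof (cases "A - B = {}")
    case True
    hence "A \<subseteq> B" by auto
    hence "A = B" using card_subset_eq[OF fB] cA cB by auto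
    thus ?thesis using less.prems by simp
  next
    case False
    then obtain c where c: "c \<in> A" "c \<notin> B" by auto
    have "card (B - A) = card B - card (B \<inter> A)" using fB by (simp add: card_Diff_subset_Int)
    moreover have "card (A - B) = card A - card (A \<inter> B)" using fA by (simp add: card_Diff_subset_Int)
    ultimately have "card (B - A) = card (A - B)" using cA cB by (simp add: Int_commute)
    moreover have pos: "card (A - B) > 0" using False fA by auto
    ultimately have "B - A \<noteq> {}" by (intro notI) simp
    then obtain d where d: "d \<in> B" "d \<notin> A" by auto
    let ?A' = "insert d (A - {c})"
    have A'J: "?A' \<in> JS X r" using swap_in_nb[OF X less.prems(1) c(1)] d cB unfolding nb_def by auto
    have PA': "P ?A'" using cl[OF less.prems(1) c(1) _ d(2) less.prems(2)] d cB by auto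
    have "?A' - B = (A - B) - {c}" using d c by auto
    hence "card (?A' - B) < card (A - B)" using c fA pos by simp
    thus ?thesis using less.hyps[OF _ A'J PA'] by simp
  qed
qed

lemma maxp:
  fixes h :: "nat set \<Rightarrow> int"
  assumes X: "finite X" and r: "r \<ge> 1" and ne: "r \<le> card X"
    and eig: "\<And>A. A \<in> JS X r \<Longrightarrow> (\<Sum>Y\<in>nb X r A. h Y) = int (r * (card X - r)) * h A"
  shows "\<And>A B. A \<in> JS X r \<Longrightarrow> B \<in> JS X r \<Longrightarrow> h A = h B"
proof -
  have fin: "finite (JS X r)" using JS_finite[OF X] .
  have nem: "JS X r \<noteq> {}" using JS_ex[OF X ne] by auto
  define M where "M = Max (h ` JS X r)"
  have "M \<in> h ` JS X r" unfolding M_def using fin nem by (intro Max_in) auto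
  then obtain A0 where A0: "A0 \<in> JS X r" "h A0 = M" by blast
  have le: "\<And>A. A \<in> JS X r \<Longrightarrow> h A \<le> M" unfolding M_def using fin by simp
  have allM: "\<And>B. B \<in> JS X r \<Longrightarrow> h B = M"
  proof -
    fix B assume B: "B \<in> JS X r"
    show "h B = M"
    proof (rule conn[OF X A0(1) B, where P = "\<lambda>C. h C = M"])
      show "h A0 = M" by fact
      fix C c d assume C: "C \<in> JS X r" and c: "c \<in> C" and d: "d \<in> X" "d \<notin> C" and hC: "h C = M"
      have inn: "insert d (C - {c}) \<in> nb X r C" using swap_in_nb[OF X C c d] .
      have nbJ: "nb X r C \<subseteq> JS X r" unfolding nb_def by auto
      have "(\<Sum>Y\<in>nb X r C. M - h Y) = int (card (nb X r C)) * M - (\<Sum>Y\<in>nb X r C. h Y)"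
        by (simp add: sum_subtractf)
      also have "\<dots> = 0" using eig[OF C] nb_card[OF X C r] hC by simp
      finally have s0: "(\<Sum>Y\<in>nb X r C. M - h Y) = 0" .
      have "\<forall>Y\<in>nb X r C. M - h Y = 0"
        using sum_nonneg_eq_0_iff[OF nb_finite[OF X], where f="\<lambda>Y. M - h Y"] s0 le nbJ by auto
      thus "h (insert d (C - {c})) = M" using inn by auto
    qed
  qed
  fix A B assume "A \<in> JS X r" "B \<in> JS X r"
  thus "h A = h B" using allM by simp
qed



lemma sum_split_pred:
  assumes "finite N"
  shows "sum F N = sum F {Y\<in>N. P Y} + sum F {Y\<in>N. \<not> P Y}"
proof -
  have "N = {Y\<in>N. P Y} \<union> {Y\<in>N. \<not> P Y}" by auto
  hence "sum F N = sum F ({Y\<in>N. P Y} \<union> {Y\<in>N. \<not> P Y})" by simp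
  also have "\<dots> = sum F {Y\<in>N. P Y} + sum F {Y\<in>N. \<not> P Y}"
    by (rule sum.union_disjoint) (use assms in auto)
  finally show ?thesis .
qed

lemma sum_split4:
  fixes F :: "nat set \<Rightarrow> int"
  assumes "finite N"
  shows "sum F N = sum F {Y\<in>N. P Y \<and> Q Y} + sum F {Y\<in>N. \<not> P Y \<and> \<not> Q Y}
     + sum F {Y\<in>N. P Y \<and> \<not> Q Y} + sum F {Y\<in>N. \<not> P Y \<and> Q Y}"
proof -
  have f1: "finite {Y\<in>N. P Y}" "finite {Y\<in>N. \<not> P Y}" using assms by auto
  have a: "sum F N = sum F {Y\<in>N. P Y} + sum F {Y\<in>N. \<not> P Y}" by (rule sum_split_pred[OF assms])
  have b: "sum F {Y\<in>N. P Y} = sum F {Y\<in>{Y\<in>N. P Y}. Q Y} + sum F {Y\<in>{Y\<in>N. P Y}. \<not> Q Y}"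
    by (rule sum_split_pred[OF f1(1)])
  have c: "sum F {Y\<in>N. \<not> P Y} = sum F {Y\<in>{Y\<in>N. \<not> P Y}. Q Y} + sum F {Y\<in>{Y\<in>N. \<not>P Y}. \<not> Q Y}"
    by (rule sum_split_pred[OF f1(2)])
  have s1: "{Y\<in>{Y\<in>N. P Y}. Q Y} = {Y\<in>N. P Y \<and> Q Y}" by auto
  have s2: "{Y\<in>{Y\<in>N. P Y}. \<not> Q Y} = {Y\<in>N. P Y \<and> \<not> Q Y}" by auto
  have s3: "{Y\<in>{Y\<in>N. \<not> P Y}. Q Y} = {Y\<in>N. \<not> P Y \<and> Q Y}" by auto
  have s4: "{Y\<in>{Y\<in>N. \<not> P Y}. \<not> Q Y} = {Y\<in>N. \<not> P Y \<and> \<not> Q Y}" by auto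
  show ?thesis using a b c unfolding s1 s2 s3 s4 by linarith
qed

lemma part10:
  assumes X: "finite X" and i: "i \<in> X" and j: "j \<in> X" and ij: "i \<noteq> j" and r: "r \<ge> 2"
    and B: "B \<in> JS (X - {i,j}) (r - 1)"
  shows "{Y\<in>nb X r (insert i B). i \<in> Y \<and> j \<notin> Y} = insert i ` nb (X - {i,j}) (r - 1) B"
proof -
  have BX: "B \<subseteq> X - {i,j}" and cB: "card B = r - 1" using B unfolding JS_def by auto
  have fB: "finite B" using BX X finite_subset by blast
  show ?thesis
  proof (rule set_eqI, rule iffI)
    fix Y assume "Y \<in> {Y\<in>nb X r (insert i B). i \<in> Y \<and> j \<notin> Y}"
    hence Y: "Y \<subseteq> X" "card Y = r" "card (insert i B \<inter> Y) = r - 1" "i \<in> Y" "j \<notin> Y"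
      unfolding nb_def JS_def by auto
    have fY: "finite Y" using Y(1) X finite_subset by blast
    let ?Y' = "Y - {i}"
    have "?Y' \<subseteq> X - {i,j}" using Y by auto
    moreover have "card ?Y' = r - 1" using Y fY by simp
    moreover have "insert i B \<inter> Y = insert i (B \<inter> ?Y')" using Y by auto
    hence "card (B \<inter> ?Y') = r - 2" using Y(3) fB BX by simp
    ultimately have "?Y' \<in> nb (X - {i,j}) (r - 1) B" unfolding nb_def JS_def by (simp add: diff_diff_left)
    moreover have "Y = insert i ?Y'" using Y by auto
    ultimately show "Y \<in> insert i ` nb (X - {i,j}) (r - 1) B" by blast
  next
    fix Y assume "Y \<in> insert i ` nb (X - {i,j}) (r - 1) B"
    then obtain Y' where Y': "Y' \<in> nb (X - {i,j}) (r - 1) B" "Y = insert i Y'" by blast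
    have Y'p: "Y' \<subseteq> X - {i,j}" "card Y' = r - 1" "card (B \<inter> Y') = r - 1 - 1"
      using Y'(1) unfolding nb_def JS_def by auto
    have fY': "finite Y'" using Y'p(1) X finite_subset by blast
    have "insert i B \<inter> Y = insert i (B \<inter> Y')" using Y'(2) by auto
    moreover have "i \<notin> B \<inter> Y'" "finite (B \<inter> Y')" using BX fB by auto
    ultimately have "card (insert i B \<inter> Y) = r - 1" using Y'p r by simp
    moreover have "i \<notin> Y'" using Y'p by auto
    hence "Y \<subseteq> X" "card Y = r" using Y' Y'p fY' i r by auto
    ultimately show "Y \<in> {Y\<in>nb X r (insert i B). i \<in> Y \<and> j \<notin> Y}"
      unfolding nb_def JS_def using Y' Y'p ij by auto
  qed
qed

lemma part01:
  assumes X: "finite X" and i: "i \<in> X" and j: "j \<in> X" and ij: "i \<noteq> j" and r: "r \<ge> 2"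
    and B: "B \<in> JS (X - {i,j}) (r - 1)"
  shows "{Y\<in>nb X r (insert i B). \<not> i \<in> Y \<and> j \<in> Y} = {insert j B}"
proof -
  have BX: "B \<subseteq> X - {i,j}" and cB: "card B = r - 1" using B unfolding JS_def by auto
  have fB: "finite B" using BX X finite_subset by blast
  show ?thesis
  proof (rule set_eqI, rule iffI)
    fix Y assume "Y \<in> {Y\<in>nb X r (insert i B). \<not> i \<in> Y \<and> j \<in> Y}"
    hence Y: "Y \<subseteq> X" "card Y = r" "card (insert i B \<inter> Y) = r - 1" "i \<notin> Y" "j \<in> Y"
      unfolding nb_def JS_def by auto
    have fY: "finite Y" using Y(1) X finite_subset by blast
    have "insert i B \<inter> Y = B \<inter> Y" using Y by auto
    hence "card (B \<inter> Y) = card B" using Y cB by simp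
    hence "B \<inter> Y = B" using fB by (metis Int_lower1 card_subset_eq)
    hence "insert j B \<subseteq> Y" using Y by auto
    moreover have "j \<notin> B" using BX by auto
    hence "card (insert j B) = r" using fB cB r by simp
    ultimately have "insert j B = Y" using fY Y(2) by (simp add: card_subset_eq)
    thus "Y \<in> {insert j B}" by simp
  next
    fix Y assume "Y \<in> {insert j B}"
    hence Y: "Y = insert j B" by simp
    have "insert i B \<inter> insert j B = B" using BX ij by auto
    moreover have "j \<notin> B" using BX by auto
    hence "card (insert j B) = r" using fB cB r by simp
    ultimately show "Y \<in> {Y\<in>nb X r (insert i B). \<not> i \<in> Y \<and> j \<in> Y}"
      unfolding nb_def JS_def using Y BX cB j by auto
  qed
qed

lemma deriv:
  fixes F :: "nat set \<Rightarrow> int" and lam kap :: int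
  assumes X: "finite X" and i: "i \<in> X" and j: "j \<in> X" and ij: "i \<noteq> j" and r: "r \<ge> 2"
    and eig: "\<And>A. A \<in> JS X r \<Longrightarrow> (\<Sum>Y\<in>nb X r A. F Y) = lam * F A + kap"
    and B: "B \<in> JS (X - {i,j}) (r - 1)"
  shows "(\<Sum>Y\<in>nb (X - {i,j}) (r - 1) B. F (insert i Y) - F (insert j Y))
          = (lam + 1) * (F (insert i B) - F (insert j B))"
proof -
  have BX: "B \<subseteq> X - {i,j}" and cB: "card B = r - 1" using B unfolding JS_def by auto
  have fB: "finite B" using BX X finite_subset by blast
  have niB: "i \<notin> B" "j \<notin> B" using BX by auto
  have A1: "insert i B \<in> JS X r" using BX cB fB i r niB unfolding JS_def by auto
  have A2: "insert j B \<in> JS X r" using BX cB fB j r niB unfolding JS_def by auto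
  have Bji: "B \<in> JS (X - {j,i}) (r - 1)" using B by (simp add: insert_commute)
  let ?N1 = "nb X r (insert i B)" and ?N2 = "nb X r (insert j B)" and ?N' = "nb (X - {i,j}) (r - 1) B"
  have e11: "{Y\<in>?N1. i \<in> Y \<and> j \<in> Y} = {Y\<in>?N2. i \<in> Y \<and> j \<in> Y}"
  proof -
    have "\<And>Y. i \<in> Y \<Longrightarrow> j \<in> Y \<Longrightarrow> card (insert i B \<inter> Y) = card (insert j B \<inter> Y)"
    proof -
      fix Y assume "i \<in> Y" "j \<in> Y"
      hence "insert i B \<inter> Y = insert i (B \<inter> Y)" "insert j B \<inter> Y = insert j (B \<inter> Y)" by auto
      moreover have "i \<notin> B \<inter> Y" "j \<notin> B \<inter> Y" "finite (B \<inter> Y)" using fB BX by auto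
      ultimately show "card (insert i B \<inter> Y) = card (insert j B \<inter> Y)" by simp
    qed
    thus ?thesis unfolding nb_def by auto
  qed
  have e00: "{Y\<in>?N1. \<not> i \<in> Y \<and> \<not> j \<in> Y} = {Y\<in>?N2. \<not> i \<in> Y \<and> \<not> j \<in> Y}"
  proof -
    have "\<And>Y. i \<notin> Y \<Longrightarrow> j \<notin> Y \<Longrightarrow> insert i B \<inter> Y = insert j B \<inter> Y" by auto
    thus ?thesis unfolding nb_def by auto
  qed
  have p10: "{Y\<in>?N1. i \<in> Y \<and> \<not> j \<in> Y} = insert i ` ?N'" using part10[OF X i j ij r B] by simp
  have p01: "{Y\<in>?N1. \<not> i \<in> Y \<and> j \<in> Y} = {insert j B}" using part01[OF X i j ij r B] by simp
  have q10: "{Y\<in>?N2. j \<in> Y \<and> \<not> i \<in> Y} = insert j ` ?N'"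
    using part10[OF X j i ij[symmetric] r Bji] by (simp add: insert_commute)
  have q01: "{Y\<in>?N2. \<not> j \<in> Y \<and> i \<in> Y} = {insert i B}"
    using part01[OF X j i ij[symmetric] r Bji] by simp
  have fN': "finite ?N'" using nb_finite X by blast
  have inj_i: "inj_on (insert i) ?N'" unfolding nb_def JS_def inj_on_def by blast
  have inj_j: "inj_on (insert j) ?N'" unfolding nb_def JS_def inj_on_def by blast
  have s1: "sum F ?N1 = sum F {Y\<in>?N1. i \<in> Y \<and> j \<in> Y} + sum F {Y\<in>?N1. \<not> i \<in> Y \<and> \<not> j \<in> Y}
     + (\<Sum>Y\<in>?N'. F (insert i Y)) + F (insert j B)"
    using sum_split4[OF nb_finite[OF X, of r "insert i B"], where F=F and P="\<lambda>Y. i \<in> Y" and Q="\<lambda>Y. j \<in> Y"]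
    unfolding p10 p01 using sum.reindex[OF inj_i, of F] by simp
  have s2: "sum F ?N2 = sum F {Y\<in>?N2. i \<in> Y \<and> j \<in> Y} + sum F {Y\<in>?N2. \<not> i \<in> Y \<and> \<not> j \<in> Y}
     + (\<Sum>Y\<in>?N'. F (insert j Y)) + F (insert i B)"
  proof -
    have "sum F ?N2 = sum F {Y\<in>?N2. j \<in> Y \<and> i \<in> Y} + sum F {Y\<in>?N2. \<not> j \<in> Y \<and> \<not> i \<in> Y}
     + sum F {Y\<in>?N2. j \<in> Y \<and> \<not> i \<in> Y} + sum F {Y\<in>?N2. \<not> j \<in> Y \<and> i \<in> Y}"
      by (rule sum_split4[OF nb_finite[OF X]])
    also have "\<dots> = sum F {Y\<in>?N2. i \<in> Y \<and> j \<in> Y} + sum F {Y\<in>?N2. \<not> i \<in> Y \<and> \<not> j \<in> Y}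
     + (\<Sum>Y\<in>?N'. F (insert j Y)) + F (insert i B)"
      unfolding q10 q01 using sum.reindex[OF inj_j, of F] by (simp add: conj_commute)
    finally show ?thesis .
  qed
  have "(\<Sum>Y\<in>?N'. F (insert i Y) - F (insert j Y)) = (\<Sum>Y\<in>?N'. F (insert i Y)) - (\<Sum>Y\<in>?N'. F (insert j Y))"
    by (simp add: sum_subtractf)
  also have "\<dots> = (sum F ?N1 - F (insert j B)) - (sum F ?N2 - F (insert i B))"
    using s1 s2 e11 e00 by simp
  also have "\<dots> = (lam + 1) * (F (insert i B) - F (insert j B))"
    using eig[OF A1] eig[OF A2] by (simp add: algebra_simps)
  finally show ?thesis .
qed

lemma zero_sum:
  fixes G :: "nat set \<Rightarrow> int" and mu :: int
  assumes X: "finite X" and r: "r \<ge> 1"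
    and eig: "\<And>A. A \<in> JS X r \<Longrightarrow> (\<Sum>Y\<in>nb X r A. G Y) = mu * G A"
    and ne: "mu \<noteq> int (r * (card X - r))"
  shows "(\<Sum>A\<in>JS X r. G A) = 0"
proof -
  have fin: "finite (JS X r)" using JS_finite[OF X] .
  have "(\<Sum>A\<in>JS X r. \<Sum>Y\<in>nb X r A. G Y) = (\<Sum>A\<in>JS X r. \<Sum>Y\<in>JS X r. if card (A \<inter> Y) = r - 1 then G Y else 0)"
    unfolding nb_def by (rule sum.cong[OF refl]) (rule sum.inter_filter[OF fin])
  also have "\<dots> = (\<Sum>Y\<in>JS X r. \<Sum>A\<in>JS X r. if card (A \<inter> Y) = r - 1 then G Y else 0)"
    by (rule sum.swap)
  also have "\<dots> = (\<Sum>Y\<in>JS X r. G Y * int (card (nb X r Y)))"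
  proof (rule sum.cong[OF refl])
    fix Y assume Y: "Y \<in> JS X r"
    have "(\<Sum>A\<in>JS X r. if card (A \<inter> Y) = r - 1 then G Y else 0) = (\<Sum>A\<in>{A\<in>JS X r. card (A \<inter> Y) = r - 1}. G Y)"
      by (rule sum.inter_filter[OF fin, symmetric])
    also have "{A\<in>JS X r. card (A \<inter> Y) = r - 1} = nb X r Y" unfolding nb_def by (auto simp: Int_commute)
    finally show "(\<Sum>A\<in>JS X r. if card (A \<inter> Y) = r - 1 then G Y else 0) = G Y * int (card (nb X r Y))"
      by simp
  qed
  also have "\<dots> = (\<Sum>Y\<in>JS X r. G Y) * int (r * (card X - r))"
    using nb_card[OF X _ r] by (simp add: sum_distrib_right)
  finally have e1: "(\<Sum>A\<in>JS X r. \<Sum>Y\<in>nb X r A. G Y) = (\<Sum>Y\<in>JS X r. G Y) * int (r * (card X - r))" .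
  have "(\<Sum>A\<in>JS X r. \<Sum>Y\<in>nb X r A. G Y) = (\<Sum>A\<in>JS X r. mu * G A)"
    by (rule sum.cong[OF refl]) (rule eig)
  also have "\<dots> = mu * (\<Sum>Y\<in>JS X r. G Y)" by (simp add: sum_distrib_left)
  finally have "(\<Sum>A\<in>JS X r. \<Sum>Y\<in>nb X r A. G Y) = mu * (\<Sum>Y\<in>JS X r. G Y)" .
  hence eq: "mu * (\<Sum>Y\<in>JS X r. G Y) = (\<Sum>Y\<in>JS X r. G Y) * int (r * (card X - r))" using e1 by linarith
  have "(mu - int (r * (card X - r))) * (\<Sum>Y\<in>JS X r. G Y) = mu * (\<Sum>Y\<in>JS X r. G Y) - int (r * (card X - r)) * (\<Sum>Y\<in>JS X r. G Y)"
    by (rule left_diff_distrib)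
  also have "\<dots> = 0"
  proof -
    have "int (r * (card X - r)) * (\<Sum>Y\<in>JS X r. G Y) = (\<Sum>Y\<in>JS X r. G Y) * int (r * (card X - r))"
      by (rule mult.commute)
    thus ?thesis using eq by linarith
  qed
  finally have "(mu - int (r * (card X - r))) * (\<Sum>Y\<in>JS X r. G Y) = 0" .
  moreover have "mu - int (r * (card X - r)) \<noteq> 0" using ne by simp
  ultimately show ?thesis by (simp only: mult_eq_0_iff) blast
qed

lemma card_JS: "finite X \<Longrightarrow> card (JS X r) = card X choose r"
  unfolding JS_def using n_subsets by blast

lemma card_JS_mem:
  assumes X: "finite X" and t: "t \<in> X" and r: "r \<ge> 1"
  shows "card {B\<in>JS X r. t \<in> B} = (card X - 1) choose (r - 1)"
proof -
  have "{B\<in>JS X r. t \<in> B} = insert t ` JS (X - {t}) (r - 1)"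
  proof (rule set_eqI, rule iffI)
    fix B assume "B \<in> {B\<in>JS X r. t \<in> B}"
    hence B: "B \<subseteq> X" "card B = r" "t \<in> B" unfolding JS_def by auto
    have "B - {t} \<in> JS (X - {t}) (r - 1)" using B X finite_subset unfolding JS_def by fastforce
    moreover have "B = insert t (B - {t})" using B by auto
    ultimately show "B \<in> insert t ` JS (X - {t}) (r - 1)" by blast
  next
    fix B assume "B \<in> insert t ` JS (X - {t}) (r - 1)"
    then obtain B' where B': "B' \<subseteq> X - {t}" "card B' = r - 1" "B = insert t B'" unfolding JS_def by blast
    have "finite B'" "t \<notin> B'" using B' X finite_subset by auto
    thus "B \<in> {B\<in>JS X r. t \<in> B}" using B' t r unfolding JS_def by auto
  qed
  moreover have "inj_on (insert t) (JS (X - {t}) (r - 1))" unfolding JS_def inj_on_def by blast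
  ultimately have "card {B\<in>JS X r. t \<in> B} = card (JS (X - {t}) (r - 1))" by (simp add: card_image)
  also have "\<dots> = (card X - 1) choose (r - 1)" using card_JS[of "X - {t}"] X t by simp
  finally show ?thesis .
qed

lemma count_sum:
  fixes e :: "nat \<Rightarrow> int"
  assumes X: "finite X" and r: "r \<ge> 1"
  shows "(\<Sum>B\<in>JS X r. \<Sum>t\<in>B. e t) = int ((card X - 1) choose (r - 1)) * (\<Sum>t\<in>X. e t)"
proof -
  have fin: "finite (JS X r)" using JS_finite[OF X] .
  have "(\<Sum>B\<in>JS X r. \<Sum>t\<in>B. e t) = (\<Sum>B\<in>JS X r. \<Sum>t\<in>X. if t \<in> B then e t else 0)"
  proof (rule sum.cong[OF refl])
    fix B assume "B \<in> JS X r"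
    hence "B = {t\<in>X. t \<in> B}" unfolding JS_def by auto
    hence "(\<Sum>t\<in>B. e t) = (\<Sum>t\<in>{t\<in>X. t \<in> B}. e t)" by simp
    also have "\<dots> = (\<Sum>t\<in>X. if t \<in> B then e t else 0)" by (rule sum.inter_filter[OF X])
    finally show "(\<Sum>t\<in>B. e t) = (\<Sum>t\<in>X. if t \<in> B then e t else 0)" .
  qed
  also have "\<dots> = (\<Sum>t\<in>X. \<Sum>B\<in>JS X r. if t \<in> B then e t else 0)" by (rule sum.swap)
  also have "\<dots> = (\<Sum>t\<in>X. e t * int ((card X - 1) choose (r - 1)))"
  proof (rule sum.cong[OF refl])
    fix t assume t: "t \<in> X"
    have "(\<Sum>B\<in>JS X r. if t \<in> B then e t else 0) = (\<Sum>B\<in>{B\<in>JS X r. t \<in> B}. e t)"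
      by (rule sum.inter_filter[OF fin, symmetric])
    also have "\<dots> = e t * int ((card X - 1) choose (r - 1))" using card_JS_mem[OF X t r] by simp
    finally show "(\<Sum>B\<in>JS X r. if t \<in> B then e t else 0) = e t * int ((card X - 1) choose (r - 1))" .
  qed
  finally show ?thesis by (simp add: sum_distrib_right mult.commute)
qed



lemma JS_mono: "A \<in> JS Y r \<Longrightarrow> Y \<subseteq> Z \<Longrightarrow> A \<in> JS Z r"
  unfolding JS_def by auto

lemma sub_ex: assumes "finite Y" "k \<le> card Y" shows "\<exists>C. C \<subseteq> Y \<and> card C = k \<and> finite C"
  using obtain_subset_with_card_n[OF assms(2)] by metis

lemma card_minus_le: "finite A \<Longrightarrow> card X - card A \<le> card (X - A)"
  by (rule diff_card_le_card_Diff)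

lemma card3: "card {a,b,c::nat} \<le> 3"
  by (rule card_insert_le_m1, simp, rule card_insert_le_m1, simp, simp)

lemma card2: "card {a,b::nat} \<le> 2"
  by (rule card_insert_le_m1, simp, simp)

lemma linrep:
  fixes G :: "nat set \<Rightarrow> int"
  assumes X: "finite X" and r: "r \<ge> 1" and big: "r + 2 \<le> card X"
    and qc: "\<And>c d C C'. c \<in> X \<Longrightarrow> d \<in> X \<Longrightarrow> c \<noteq> d \<Longrightarrow> C \<in> JS (X - {c,d}) (r - 1)
       \<Longrightarrow> C' \<in> JS (X - {c,d}) (r - 1) \<Longrightarrow> G (insert c C) - G (insert d C) = G (insert c C') - G (insert d C')"
  shows "\<exists>\<gamma> e. \<forall>B\<in>JS X r. G B = \<gamma> + (\<Sum>t\<in>B. e t)"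
proof -
  have "X \<noteq> {}" using big by auto
  then obtain t0 where t0: "t0 \<in> X" by blast
  have exC: "\<And>A. A \<subseteq> X \<Longrightarrow> card A \<le> 3 \<Longrightarrow> \<exists>C. C \<in> JS (X - A) (r - 1)"
  proof -
    fix A assume "A \<subseteq> X" "card A \<le> 3"
    hence "card (X - A) \<ge> card X - card A" using card_minus_le finite_subset[OF _ X] by blast
    hence "r - 1 \<le> card (X - A)" using big \<open>card A \<le> 3\<close> by linarith
    thus "\<exists>C. C \<in> JS (X - A) (r - 1)" using JS_ex X by blast
  qed
  define Cs where "Cs t = (SOME C. C \<in> JS (X - {t,t0}) (r - 1))" for t
  have Cs: "\<And>t. t \<in> X \<Longrightarrow> Cs t \<in> JS (X - {t,t0}) (r - 1)"
  proof -
    fix t assume "t \<in> X"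
    hence "\<exists>C. C \<in> JS (X - {t,t0}) (r - 1)" using exC[of "{t,t0}"] t0 card2[of t t0] by auto
    thus "Cs t \<in> JS (X - {t,t0}) (r - 1)" unfolding Cs_def by (rule someI_ex)
  qed
  define e where "e t = (if t = t0 then 0 else G (insert t (Cs t)) - G (insert t0 (Cs t)))" for t
  have key: "\<And>c d C. c \<in> X \<Longrightarrow> d \<in> X \<Longrightarrow> c \<noteq> d \<Longrightarrow> C \<in> JS (X - {c,d}) (r - 1)
      \<Longrightarrow> G (insert c C) - G (insert d C) = e c - e d"
  proof -
    fix c d C assume c: "c \<in> X" and d: "d \<in> X" and cd: "c \<noteq> d" and C: "C \<in> JS (X - {c,d}) (r - 1)"
    show "G (insert c C) - G (insert d C) = e c - e d"
    proof (cases "d = t0")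
      case True
      have "e c = G (insert c (Cs c)) - G (insert t0 (Cs c))" unfolding e_def using cd True by simp
      also have "\<dots> = G (insert c C) - G (insert t0 C)" using qc[OF c t0, of "Cs c" C] Cs[OF c] C cd True by simp
      finally show ?thesis using True unfolding e_def by simp
    next
      case False
      note dt = False
      show ?thesis
      proof (cases "c = t0")
        case True
        have "e d = G (insert d (Cs d)) - G (insert t0 (Cs d))" unfolding e_def using dt by simp
        also have "\<dots> = G (insert d C) - G (insert t0 C)" using qc[OF d t0, of "Cs d" C] Cs[OF d] C cd True
          by (simp add: insert_commute)
        finally show ?thesis using True unfolding e_def by simp
      next
        case False
        obtain C' where C': "C' \<in> JS (X - {c,d,t0}) (r - 1)" using exC[of "{c,d,t0}"] c d t0 card3[of c d t0]
          by auto
        have C'1: "C' \<in> JS (X - {c,d}) (r - 1)" using C' by (rule JS_mono) auto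
        have C'2: "C' \<in> JS (X - {c,t0}) (r - 1)" using C' by (rule JS_mono) auto
        have C'3: "C' \<in> JS (X - {d,t0}) (r - 1)" using C' by (rule JS_mono) auto
        have "G (insert c C) - G (insert d C) = G (insert c C') - G (insert d C')"
          using qc[OF c d cd C C'1] .
        also have "\<dots> = (G (insert c C') - G (insert t0 C')) - (G (insert d C') - G (insert t0 C'))" by simp
        also have "G (insert c C') - G (insert t0 C') = e c"
          using qc[OF c t0 False C'2 Cs[OF c]] unfolding e_def using False by simp
        also have "G (insert d C') - G (insert t0 C') = e d"
          using qc[OF d t0 dt C'3 Cs[OF d]] unfolding e_def using dt by simp
        finally show ?thesis .
      qed
    qed
  qed
  obtain B0 where B0: "B0 \<in> JS X r" using JS_ex[OF X] big by fastforce
  define \<gamma> where "\<gamma> = G B0 - (\<Sum>t\<in>B0. e t)"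
  have "\<forall>B\<in>JS X r. G B = \<gamma> + (\<Sum>t\<in>B. e t)"
  proof
    fix B assume B: "B \<in> JS X r"
    have "G B - (\<Sum>t\<in>B. e t) = G B0 - (\<Sum>t\<in>B0. e t)"
    proof (rule conn[OF X B0 B, where P = "\<lambda>B. G B - (\<Sum>t\<in>B. e t) = G B0 - (\<Sum>t\<in>B0. e t)"])
      show "G B0 - sum e B0 = G B0 - sum e B0" by simp
      fix C c d assume C: "C \<in> JS X r" and c: "c \<in> C" and d: "d \<in> X" "d \<notin> C"
        and P: "G C - sum e C = G B0 - sum e B0"
      have fC: "finite C" using JS_mem_finite[OF X C] .
      have CX: "C \<subseteq> X" "card C = r" using C unfolding JS_def by auto
      have C0: "C - {c} \<in> JS (X - {d,c}) (r - 1)" using CX c d fC unfolding JS_def by auto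
      have "G (insert d (C - {c})) - G (insert c (C - {c})) = e d - e c"
        using key[OF d(1) _ _ C0] c CX d by auto
      moreover have "insert c (C - {c}) = C" using c by auto
      moreover have "sum e (insert d (C - {c})) = e d + sum e (C - {c})" using fC d by simp
      moreover have "sum e C = e c + sum e (C - {c})" using fC c by (simp add: sum.remove)
      ultimately show "G (insert d (C - {c})) - sum e (insert d (C - {c})) = G B0 - sum e B0"
        using P by simp
    qed
    thus "G B = \<gamma> + (\<Sum>t\<in>B. e t)" unfolding \<gamma>_def by simp
  qed
  thus ?thesis by blast
qed



lemma sum_ind_card:
  fixes B S :: "nat set"
  assumes "finite B"
  shows "(\<Sum>t\<in>B. if t \<in> S then (1::int) else 0) = int (card (B \<inter> S))"
proof -
  have "(\<Sum>t\<in>B. if t \<in> S then (1::int) else 0) = (\<Sum>t\<in>{t\<in>B. t \<in> S}. 1)"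
    by (rule sum.inter_filter[OF assms, symmetric])
  also have "{t\<in>B. t \<in> S} = B \<inter> S" by auto
  finally show ?thesis by simp
qed

lemma classify:
  fixes e :: "nat \<Rightarrow> int" and \<gamma> :: int
  assumes X: "finite X" and r3: "3 \<le> r" and big: "2 * r + 1 \<le> card X"
    and vals: "\<And>B. B \<in> JS X r \<Longrightarrow> -1 \<le> \<gamma> + (\<Sum>t\<in>B. e t) \<and> \<gamma> + (\<Sum>t\<in>B. e t) \<le> 1"
    and zs: "int (card X) * \<gamma> + int r * (\<Sum>t\<in>X. e t) = 0"
    and B0: "B0 \<in> JS X r" and nz: "\<gamma> + (\<Sum>t\<in>B0. e t) \<noteq> 0"
  shows "\<exists>p p'. p \<in> X \<and> p' \<in> X \<and> p \<noteq> p' \<and>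
    (\<forall>B\<in>JS X r. \<gamma> + (\<Sum>t\<in>B. e t) = (if p \<in> B then 1 else 0) - (if p' \<in> B then 1 else 0))"
proof -
  define m where "m = card X"
  have mpos: "m > 0" using big unfolding m_def by simp
  have Xne: "X \<noteq> {}" using mpos X unfolding m_def by auto
  define M where "M = Max (e ` X)"
  define mu where "mu = Min (e ` X)"
  have "M \<in> e ` X" unfolding M_def using X Xne by (intro Max_in) auto
  then obtain s where s: "s \<in> X" "e s = M" by blast
  have "mu \<in> e ` X" unfolding mu_def using X Xne by (intro Min_in) auto
  then obtain s' where s': "s' \<in> X" "e s' = mu" by blast
  have leM: "\<And>t. t \<in> X \<Longrightarrow> e t \<le> M" unfolding M_def using X by simp
  have gemu: "\<And>t. t \<in> X \<Longrightarrow> mu \<le> e t" unfolding mu_def using X by simp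
  have JSI: "\<And>B. B \<subseteq> X \<Longrightarrow> card B = r \<Longrightarrow> B \<in> JS X r" unfolding JS_def by simp
  have fin_sub: "\<And>B. B \<subseteq> X \<Longrightarrow> finite B" using X finite_subset by blast
  show ?thesis
  proof (cases "M = mu")
    case True
    have ce: "\<And>t. t \<in> X \<Longrightarrow> e t = mu" using leM gemu True by (simp add: order_antisym)
    have sB: "\<And>B. B \<in> JS X r \<Longrightarrow> (\<Sum>t\<in>B. e t) = int r * mu"
    proof -
      fix B assume B: "B \<in> JS X r"
      hence "B \<subseteq> X" "card B = r" unfolding JS_def by auto
      hence "(\<Sum>t\<in>B. e t) = (\<Sum>t\<in>B. mu)" using ce by (intro sum.cong) auto
      thus "(\<Sum>t\<in>B. e t) = int r * mu" using \<open>card B = r\<close> by simp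
    qed
    have "(\<Sum>t\<in>X. e t) = (\<Sum>t\<in>X. mu)" using ce by (intro sum.cong) auto
    hence "(\<Sum>t\<in>X. e t) = int m * mu" unfolding m_def by simp
    hence "int m * (\<gamma> + int r * mu) = 0" using zs unfolding m_def by (simp add: algebra_simps)
    hence "\<gamma> + int r * mu = 0" using mpos by simp
    thus ?thesis using nz sB[OF B0] by simp
  next
    case False
    have "mu \<le> M" using gemu[OF s(1)] s(2) by simp
    hence lt: "mu < M" using False by simp
    have ss': "s \<noteq> s'" using lt s s' by auto
    have "card (X - {s,s'}) = card X - card {s,s'}" using s s' by (intro card_Diff_subset) auto
    moreover have "card {s,s'} = 2" using ss' by simp
    ultimately have cXss: "card (X - {s,s'}) = m - 2" unfolding m_def by linarith
    have "r - 1 \<le> card (X - {s,s'})" using cXss big unfolding m_def by linarith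
    then obtain C1 where C1: "C1 \<subseteq> X - {s,s'}" "card C1 = r - 1" "finite C1"
      using sub_ex[of "X - {s,s'}" "r - 1"] X by blast
    have nC1: "s \<notin> C1" "s' \<notin> C1" using C1(1) by auto
    have "card (insert s C1) = r" "card (insert s' C1) = r" using nC1 C1(2,3) r3 by simp_all
    moreover have "insert s C1 \<subseteq> X" "insert s' C1 \<subseteq> X" using C1(1) s s' by auto
    ultimately have Bs: "insert s C1 \<in> JS X r" "insert s' C1 \<in> JS X r" using JSI by auto
    have sBs: "(\<Sum>t\<in>insert s C1. e t) = M + (\<Sum>t\<in>C1. e t)" using nC1(1) C1(3) s(2) by simp
    have sBs': "(\<Sum>t\<in>insert s' C1. e t) = mu + (\<Sum>t\<in>C1. e t)" using nC1(2) C1(3) s'(2) by simp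
    have le2: "M - mu \<le> 2" using vals[OF Bs(1)] vals[OF Bs(2)] sBs sBs' by linarith
    show ?thesis
    proof (cases "M - mu = 1")
      case True
      define S where "S = {t\<in>X. e t = M}"
      define L where "L = X - S"
      have eS: "\<And>t. t \<in> X \<Longrightarrow> e t = mu + (if t \<in> S then 1 else 0)"
        unfolding S_def using leM gemu True by force
      have sumB: "\<And>B. B \<subseteq> X \<Longrightarrow> (\<Sum>t\<in>B. e t) = int (card B) * mu + int (card (B \<inter> S))"
      proof -
        fix B assume B: "B \<subseteq> X"
        have "(\<Sum>t\<in>B. e t) = (\<Sum>t\<in>B. mu + (if t \<in> S then 1 else 0))" using eS B by (intro sum.cong) auto
        also have "\<dots> = int (card B) * mu + (\<Sum>t\<in>B. if t \<in> S then (1::int) else 0)"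
          by (simp add: sum.distrib)
        also have "\<dots> = int (card B) * mu + int (card (B \<inter> S))" using sum_ind_card[OF fin_sub[OF B]] by simp
        finally show "(\<Sum>t\<in>B. e t) = int (card B) * mu + int (card (B \<inter> S))" .
      qed
      define \<alpha> where "\<alpha> = \<gamma> + int r * mu"
      have gB: "\<And>B. B \<subseteq> X \<Longrightarrow> card B = r \<Longrightarrow> -1 \<le> \<alpha> + int (card (B \<inter> S)) \<and> \<alpha> + int (card (B \<inter> S)) \<le> 1"
      proof -
        fix B assume B: "B \<subseteq> X" "card B = r"
        have "\<gamma> + (\<Sum>t\<in>B. e t) = \<alpha> + int (card (B \<inter> S))" using sumB[OF B(1)] B(2) unfolding \<alpha>_def by simp
        thus "-1 \<le> \<alpha> + int (card (B \<inter> S)) \<and> \<alpha> + int (card (B \<inter> S)) \<le> 1" using vals[OF JSI[OF B]] by simp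
      qed
      have SX: "S \<subseteq> X" unfolding S_def by auto
      have fS: "finite S" using SX fin_sub by blast
      have fL: "finite L" using X unfolding L_def by simp
      have sS: "s \<in> S" using s unfolding S_def by simp
      have s'L: "s' \<in> L" using s' lt unfolding S_def L_def by simp
      have cardSL: "card S + card L = m" unfolding L_def m_def using SX X fS by (simp add: card_Diff_subset card_mono)
      have "card S > 0" using sS fS by (auto simp: card_gt_0_iff)
      hence sigpos: "card S \<ge> 1" by simp
      have "card L > 0" using s'L fL by (auto simp: card_gt_0_iff)
      hence lampos: "card L \<ge> 1" by simp
      have XS: "X \<inter> S = S" using SX by auto
      have zs2: "int m * \<alpha> + int r * int (card S) = 0"
        using zs sumB[of X] XS unfolding \<alpha>_def m_def by (simp add: algebra_simps)
      have LS: "L \<inter> S = {}" unfolding L_def by auto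
      show ?thesis
      proof (cases "r \<le> card L")
        case True
        obtain B where B: "B \<subseteq> L" "card B = r" using sub_ex[OF fL True] by auto
        have "B \<inter> S = {}" using B LS by auto
        hence a1: "-1 \<le> \<alpha>" using gB[of B] B unfolding L_def by auto
        have "int r * int (card S) > 0" using sigpos r3 by simp
        hence "int m * \<alpha> < 0" using zs2 by linarith
        hence "\<alpha> < 0" using mpos by (simp add: mult_less_0_iff)
        hence am1: "\<alpha> = -1" using a1 by simp
        hence "int m * \<alpha> = - int m" by simp
        hence "int m = int r * int (card S)" using zs2 by linarith
        hence "int m = int (r * card S)" by simp
        hence mrs: "m = r * card S" by (simp only: of_nat_eq_iff)
        have "card S \<le> 2"
        proof (rule ccontr)
          assume "\<not> card S \<le> 2"
          hence "3 \<le> card S" by simp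
          then obtain C3 where C3: "C3 \<subseteq> S" "card C3 = 3" using sub_ex[OF fS] by blast
          have "r - 3 \<le> card L" using True by simp
          then obtain D where D: "D \<subseteq> L" "card D = r - 3" "finite D" using sub_ex[OF fL] by blast
          have fC3: "finite C3" using C3 fS finite_subset by blast
          have disj: "C3 \<inter> D = {}" using C3 D LS by auto
          have "card (C3 \<union> D) = r" using card_Un_disjoint[OF fC3 D(3) disj] C3 D r3 by simp
          moreover have "(C3 \<union> D) \<inter> S = C3" using C3 D LS by auto
          moreover have "C3 \<union> D \<subseteq> X" using C3 D SX unfolding L_def by auto
          ultimately have "\<alpha> + 3 \<le> 1" using gB[of "C3 \<union> D"] C3 by simp
          thus False using am1 by simp
        qed
        hence "r * card S \<le> r * 2" by (rule mult_le_mono2)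
        hence "m \<le> 2 * r" using mrs by simp
        thus ?thesis using big unfolding m_def by simp
      next
        case False
        have cS: "card S \<ge> r" using False cardSL big unfolding m_def by linarith
        obtain B where B: "B \<subseteq> S" "card B = r" using sub_ex[OF fS cS] by auto
        have "B \<inter> S = B" using B by auto
        hence a1: "\<alpha> + int r \<le> 1" using gB[of B] B SX by auto
        have "r - card L \<le> card S" using cS by simp
        then obtain D where D: "D \<subseteq> S" "card D = r - card L" "finite D" using sub_ex[OF fS] by blast
        have disj: "L \<inter> D = {}" using D LS by auto
        have "card (L \<union> D) = r" using card_Un_disjoint[OF fL D(3) disj] D False by simp
        moreover have "(L \<union> D) \<inter> S = D" using D LS by auto
        moreover have "L \<union> D \<subseteq> X" using D SX unfolding L_def by auto
        ultimately have a2: "-1 \<le> \<alpha> + int (r - card L)" using gB[of "L \<union> D"] D by simp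
        have cS': "int r * int (card S) = int r * int m - int r * int (card L)"
          using cardSL by (simp add: right_diff_distrib[symmetric])
        have d1: "int m * (\<alpha> + int r) = int m * \<alpha> + int m * int r" by (simp add: distrib_left)
        have d2: "int m * int r = int r * int m" by simp
        have eqm: "int m * (\<alpha> + int r) = int r * int (card L)"
          using zs2 cS' d1 d2 by linarith
        have "\<alpha> + int r \<ge> 1"
        proof (rule ccontr)
          assume "\<not> \<alpha> + int r \<ge> 1"
          hence "\<alpha> + int r \<le> 0" by simp
          hence "int m * (\<alpha> + int r) \<le> 0" using mpos by (simp add: mult_nonneg_nonpos)
          moreover have "int r * int (card L) > 0" using r3 lampos by simp
          ultimately show False using eqm by simp
        qed
        hence "\<alpha> + int r = 1" using a1 by simp
        hence mrl: "int m = int r * int (card L)" using eqm by simp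
        have "card L \<le> 2" using a2 \<open>\<alpha> + int r = 1\<close> False by linarith
        hence "int r * int (card L) \<le> int r * 2" by (simp add: mult_left_mono)
        hence "m \<le> 2 * r" using mrl by simp
        thus ?thesis using big unfolding m_def by simp
      qed
    next
      case False
      hence M2: "M = mu + 2" using le2 lt by simp
      have middle: "\<And>p p'. p \<in> X - {s,s'} \<Longrightarrow> p' \<in> X - {s,s'} \<Longrightarrow> e p \<le> e p'"
      proof -
        fix p p' assume p: "p \<in> X - {s,s'}" and p': "p' \<in> X - {s,s'}"
        show "e p \<le> e p'"
        proof (cases "p = p'")
          case True thus ?thesis by simp
        next
          case False
          have c4: "card {s,s',p,p'} \<le> 4" by (rule card_insert_le_m1) (simp_all add: card3)
          have "card X - card {s,s',p,p'} \<le> card (X - {s,s',p,p'})" by (rule card_minus_le) simp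
          hence "r - 2 \<le> card (X - {s,s',p,p'})" using c4 big by linarith
          then obtain C where C: "C \<subseteq> X - {s,s',p,p'}" "card C = r - 2" "finite C"
            using sub_ex[of "X - {s,s',p,p'}"] X by blast
          have nC: "s \<notin> C" "p \<notin> C" "s' \<notin> C" "p' \<notin> C" using C(1) by auto
          have ps: "p \<noteq> s" "p' \<noteq> s'" using p p' by auto
          have "card (insert s (insert p C)) = r" using nC ps C(2,3) r3 by simp
          moreover have "insert s (insert p C) \<subseteq> X" using C(1) p s by auto
          ultimately have B1: "insert s (insert p C) \<in> JS X r" using JSI by blast
          have "card (insert s' (insert p' C)) = r" using nC ps C(2,3) r3 by simp
          moreover have "insert s' (insert p' C) \<subseteq> X" using C(1) p' s' by auto
          ultimately have B2: "insert s' (insert p' C) \<in> JS X r" using JSI by blast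
          have "(\<Sum>t\<in>insert s (insert p C). e t) = M + e p + (\<Sum>t\<in>C. e t)" using nC ps C(3) s(2) by simp
          moreover have "(\<Sum>t\<in>insert s' (insert p' C). e t) = mu + e p' + (\<Sum>t\<in>C. e t)" using nC ps C(3) s'(2) by simp
          ultimately show ?thesis using vals[OF B1] vals[OF B2] M2 by linarith
        qed
      qed
      have "card (X - {s,s'}) > 0" using cXss big r3 unfolding m_def by simp
      hence "X - {s,s'} \<noteq> {}" by (intro notI) simp
      then obtain p0 where p0: "p0 \<in> X - {s,s'}" by blast
      define v where "v = e p0"
      have ev: "\<And>t. t \<in> X - {s,s'} \<Longrightarrow> e t = v"
      proof -
        fix t assume t: "t \<in> X - {s,s'}"
        show "e t = v" unfolding v_def using middle[OF t p0] middle[OF p0 t] by simp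
      qed
      define a where "a = M - v"
      define a' where "a' = mu - v"
      have aa: "a - a' = 2" unfolding a_def a'_def using M2 by simp
      have eform: "\<And>t. t \<in> X \<Longrightarrow> e t = v + (if t = s then a else 0) + (if t = s' then a' else 0)"
        unfolding a_def a'_def using ev s s' ss' by auto
      have sumB: "\<And>B. B \<subseteq> X \<Longrightarrow> (\<Sum>t\<in>B. e t) = int (card B) * v + (if s \<in> B then a else 0) + (if s' \<in> B then a' else 0)"
      proof -
        fix B assume B: "B \<subseteq> X"
        have fB: "finite B" using fin_sub[OF B] .
        have "(\<Sum>t\<in>B. e t) = (\<Sum>t\<in>B. v + (if t = s then a else 0) + (if t = s' then a' else 0))"
          using eform B by (intro sum.cong) auto
        also have "\<dots> = int (card B) * v + (\<Sum>t\<in>B. if t = s then a else 0) + (\<Sum>t\<in>B. if t = s' then a' else 0)"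
          by (simp add: sum.distrib)
        also have "\<dots> = int (card B) * v + (if s \<in> B then a else 0) + (if s' \<in> B then a' else 0)"
          using fB by (simp add: sum.delta)
        finally show "(\<Sum>t\<in>B. e t) = int (card B) * v + (if s \<in> B then a else 0) + (if s' \<in> B then a' else 0)" .
      qed
      define \<alpha> where "\<alpha> = \<gamma> + int r * v"
      have gform: "\<And>B. B \<in> JS X r \<Longrightarrow> \<gamma> + (\<Sum>t\<in>B. e t) = \<alpha> + (if s \<in> B then a else 0) + (if s' \<in> B then a' else 0)"
        using sumB unfolding JS_def \<alpha>_def by auto
      have "s' \<notin> insert s C1" "s \<notin> insert s' C1" using C1 ss' by auto
      hence g1: "\<gamma> + (\<Sum>t\<in>insert s C1. e t) = \<alpha> + a" and g2: "\<gamma> + (\<Sum>t\<in>insert s' C1. e t) = \<alpha> + a'"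
        using gform[OF Bs(1)] gform[OF Bs(2)] by auto
      have h1: "\<alpha> + a = 1" and h2: "\<alpha> + a' = -1" using vals[OF Bs(1)] vals[OF Bs(2)] g1 g2 aa by linarith+
      have "(\<Sum>t\<in>X. e t) = int m * v + a + a'" using sumB[of X] s s' unfolding m_def by simp
      hence "int m * \<gamma> + int r * (int m * v + a + a') = 0" using zs unfolding m_def by simp
      hence q1: "int m * \<alpha> + int r * (a + a') = 0" unfolding \<alpha>_def by (simp add: algebra_simps)
      have "a + a' = - 2 * \<alpha>" using h1 h2 by simp
      hence q2: "int r * (a + a') = -2 * (int r * \<alpha>)" by simp
      have q3: "\<alpha> * (int m - 2 * int r) = int m * \<alpha> - 2 * (int r * \<alpha>)" by (simp add: algebra_simps)
      have "\<alpha> * (int m - 2 * int r) = 0" using q1 q2 q3 by linarith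
      moreover have "int m - 2 * int r \<noteq> 0" using big unfolding m_def by simp
      ultimately have a0: "\<alpha> = 0" by simp
      have "\<forall>B\<in>JS X r. \<gamma> + (\<Sum>t\<in>B. e t) = (if s \<in> B then 1 else 0) - (if s' \<in> B then 1 else 0)"
        using gform a0 h1 h2 by auto
      thus ?thesis using s s' ss' by blast
    qed
  qed
qed



lemma card_set_le: "card (set xs) \<le> length xs"
  by (rule card_length)

lemma avoid_ex:
  assumes "Z \<subseteq> {0..<n}" "card Z \<le> z" "k + z \<le> n"
  shows "\<exists>D. D \<in> JS ({0..<n} - Z) k"
proof -
  have "finite Z" using assms(1) finite_subset by blast
  hence "card {0..<n} - card Z \<le> card ({0..<n} - Z)" by (rule card_minus_le)
  hence "k \<le> card ({0..<n} - Z)" using assms by simp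
  thus ?thesis using JS_ex[of "{0..<n} - Z" k] by simp
qed

lemma JS_insert:
  assumes "C \<in> JS Y k" "x \<in> Z" "x \<notin> C" "Y \<subseteq> Z" "finite C"
  shows "insert x C \<in> JS Z (Suc k)"
  using assms unfolding JS_def by auto

lemma JS_insert2:
  assumes "C \<in> JS (Z - A) k" "x \<in> Z" "x \<notin> A" "x \<notin> C" "finite C"
  shows "insert x C \<in> JS (Z - (A - {x})) (Suc k)"
  using assms unfolding JS_def by auto

locale jg =
  fixes n w :: nat and f :: "nat set \<Rightarrow> int" and c :: int
  assumes w4: "4 \<le> w" and nbig: "2 * w + 1 \<le> n"
    and f01: "\<And>A. f A = 0 \<or> f A = 1"
    and eig: "\<And>A. A \<in> JS {0..<n} w \<Longrightarrow>
       (\<Sum>Y\<in>nb {0..<n} w A. f Y) = c + (int (w * (n - w)) - 2 * int n + 2) * f A"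
begin

abbreviation "N \<equiv> {0..<n}"
definition "\<theta> = int (w * (n - w)) - 2 * int n + 2"
definition "g a b B = f (insert a B) - f (insert b B)"
definition "twin a b \<longleftrightarrow> (\<forall>B\<in>JS (N - {a,b}) (w - 1). f (insert a B) = f (insert b B))"
definition "Quad a b c' d \<longleftrightarrow> a \<in> N \<and> b \<in> N \<and> c' \<in> N \<and> d \<in> N \<and> distinct [a,b,c',d] \<and>
   (\<forall>C\<in>JS (N - {a,b,c',d}) (w - 2). f (insert a (insert c' C)) = 1 \<and> f (insert b (insert d C)) = 1
      \<and> f (insert b (insert c' C)) = 0 \<and> f (insert a (insert d C)) = 0)"

lemma deg_id: "\<theta> + 2 = int ((w - 2) * (card (N - {a,b} - {c',d}) - (w - 2)))"
  if "a \<in> N" "b \<in> N" "a \<noteq> b" "c' \<in> N - {a,b}" "d \<in> N - {a,b}" "c' \<noteq> d"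
proof -
  have "N - {a,b} - {c',d} = N - {a,b,c',d}" by blast
  hence "card (N - {a,b} - {c',d}) = card (N - {a,b,c',d})" by simp
  also have "\<dots> = card N - card {a,b,c',d}" using that by (intro card_Diff_subset) auto
  also have "card {a,b,c',d} = 4" using that by (simp add: card_insert_if)
  finally have cd: "card (N - {a,b} - {c',d}) = n - 4" by simp
  obtain u where u: "w = 4 + u" using le_Suc_ex[OF w4] by blast
  obtain v where v: "n = (2 * w + 1) + v" using le_Suc_ex[OF nbig] by blast
  have e1: "w - 2 = u + 2" "n - 4 - (w - 2) = u + 3 + v" "n - w = u + 5 + v" using u v by simp_all
  show ?thesis unfolding \<theta>_def cd e1 using u v by (simp add: algebra_simps)
qed

end



context jg
begin

lemma cardN2: "a \<in> N \<Longrightarrow> b \<in> N \<Longrightarrow> a \<noteq> b \<Longrightarrow> card (N - {a,b}) = n - 2"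
proof -
  assume h: "a \<in> N" "b \<in> N" "a \<noteq> b"
  have "card (N - {a,b}) = card N - card {a,b}" using h by (intro card_Diff_subset) auto
  thus ?thesis using h by simp
qed

lemma eig': "A \<in> JS N w \<Longrightarrow> (\<Sum>Y\<in>nb N w A. f Y) = \<theta> * f A + c"
  using eig unfolding \<theta>_def by (simp add: add.commute)

lemma G_eig:
  assumes a: "a \<in> N" and b: "b \<in> N" and ab: "a \<noteq> b" and B: "B \<in> JS (N - {a,b}) (w - 1)"
  shows "(\<Sum>Y\<in>nb (N - {a,b}) (w - 1) B. g a b Y) = (\<theta> + 1) * g a b B"
  unfolding g_def using deriv[of N a b w f \<theta> c B] a b ab B eig' w4 by simp

lemma H_const:
  assumes a: "a \<in> N" and b: "b \<in> N" and ab: "a \<noteq> b" and cc: "c' \<in> N - {a,b}" and d: "d \<in> N - {a,b}"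
    and cd: "c' \<noteq> d"
    and C: "C \<in> JS (N - {a,b} - {c',d}) (w - 2)" and C': "C' \<in> JS (N - {a,b} - {c',d}) (w - 2)"
  shows "g a b (insert c' C) - g a b (insert d C) = g a b (insert c' C') - g a b (insert d C')"
proof -
  have fX: "finite (N - {a,b})" by simp
  have w11: "w - 1 - 1 = w - 2" by simp
  have e2: "\<And>D. D \<in> JS (N - {a,b} - {c',d}) (w - 2) \<Longrightarrow>
     (\<Sum>Y\<in>nb (N - {a,b} - {c',d}) (w - 2) D. g a b (insert c' Y) - g a b (insert d Y))
       = (\<theta> + 1 + 1) * (g a b (insert c' D) - g a b (insert d D))"
  proof -
    fix D assume D: "D \<in> JS (N - {a,b} - {c',d}) (w - 2)"
    show "(\<Sum>Y\<in>nb (N - {a,b} - {c',d}) (w - 2) D. g a b (insert c' Y) - g a b (insert d Y))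
       = (\<theta> + 1 + 1) * (g a b (insert c' D) - g a b (insert d D))"
      using deriv[OF fX cc d cd, of "w - 1" "g a b" "\<theta> + 1" 0 D] G_eig[OF a b ab] D w4
      unfolding w11 by simp
  qed
  have fY: "finite (N - {a,b} - {c',d})" by simp
  have cY: "card (N - {a,b} - {c',d}) = n - 4"
  proof -
    have "N - {a,b} - {c',d} = N - {a,b,c',d}" by blast
    hence "card (N - {a,b} - {c',d}) = card N - card {a,b,c',d}" using a b cc d by (simp add: card_Diff_subset)
    moreover have "card {a,b,c',d} = 4" using ab cc d cd by (simp add: card_insert_if)
    ultimately show ?thesis by simp
  qed
  have r1: "w - 2 \<ge> 1" using w4 by simp
  have rle: "w - 2 \<le> card (N - {a,b} - {c',d})" using cY w4 nbig by simp
  have eg: "\<And>D. D \<in> JS (N - {a,b} - {c',d}) (w - 2) \<Longrightarrow>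
     (\<Sum>Y\<in>nb (N - {a,b} - {c',d}) (w - 2) D. g a b (insert c' Y) - g a b (insert d Y))
       = int ((w - 2) * (card (N - {a,b} - {c',d}) - (w - 2))) * (g a b (insert c' D) - g a b (insert d D))"
    using e2 deg_id[OF a b ab cc d cd] by (simp add: add.assoc)
  show ?thesis using maxp[OF fY r1 rle eg C C'] by simp
qed

lemma G_zero:
  assumes a: "a \<in> N" and b: "b \<in> N" and ab: "a \<noteq> b"
  shows "(\<Sum>B\<in>JS (N - {a,b}) (w - 1). g a b B) = 0"
proof (rule zero_sum[where mu = "\<theta> + 1"])
  show "finite (N - {a,b})" by simp
  show "1 \<le> w - 1" using w4 by simp
  show "\<And>A. A \<in> JS (N - {a, b}) (w - 1) \<Longrightarrow> (\<Sum>Y\<in>nb (N - {a, b}) (w - 1) A. g a b Y) = (\<theta> + 1) * g a b A"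
    using G_eig[OF a b ab] by simp
  obtain u where u: "w = 4 + u" using le_Suc_ex[OF w4] by blast
  obtain v where v: "n = (2 * w + 1) + v" using le_Suc_ex[OF nbig] by blast
  have e1: "w - 1 = u + 3" "n - 2 - (w - 1) = u + 4 + v" "n - w = u + 5 + v" using u v by simp_all
  show "\<theta> + 1 \<noteq> int ((w - 1) * (card (N - {a, b}) - (w - 1)))"
    unfolding cardN2[OF a b ab] e1 \<theta>_def using u v by (simp add: algebra_simps)
qed

end



context jg
begin

lemma FC:
  assumes a: "a \<in> N" and b: "b \<in> N" and ab: "a \<noteq> b"
    and B0: "B0 \<in> JS (N - {a,b}) (w - 1)" and nz: "g a b B0 \<noteq> 0"
  shows "\<exists>p p'. p \<in> N - {a,b} \<and> p' \<in> N - {a,b} \<and> p \<noteq> p' \<and>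
    (\<forall>B\<in>JS (N - {a,b}) (w - 1). g a b B = (if p \<in> B then 1 else 0) - (if p' \<in> B then 1 else 0))"
proof -
  define X where "X = N - {a,b}"
  define r where "r = w - 1"
  define m where "m = card X"
  have fX: "finite X" unfolding X_def by simp
  have mX: "m = n - 2" unfolding m_def X_def using cardN2[OF a b ab] .
  have r1: "r \<ge> 1" "3 \<le> r" unfolding r_def using w4 by simp_all
  have big1: "r + 2 \<le> card X" using mX nbig w4 unfolding m_def r_def by simp
  have big2: "2 * r + 1 \<le> card X" using mX nbig w4 unfolding m_def r_def by simp
  have rr: "r - 1 = w - 2" unfolding r_def by simp
  have qc: "\<And>c' d C C'. c' \<in> X \<Longrightarrow> d \<in> X \<Longrightarrow> c' \<noteq> d \<Longrightarrow> C \<in> JS (X - {c',d}) (r - 1)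
       \<Longrightarrow> C' \<in> JS (X - {c',d}) (r - 1) \<Longrightarrow> g a b (insert c' C) - g a b (insert d C) = g a b (insert c' C') - g a b (insert d C')"
    unfolding X_def rr using H_const[OF a b ab] by blast
  obtain \<gamma> e where lin: "\<forall>B\<in>JS X r. g a b B = \<gamma> + (\<Sum>t\<in>B. e t)"
    using linrep[OF fX r1(1) big1, where G="g a b", OF qc] by blast
  have vals: "\<And>B. B \<in> JS X r \<Longrightarrow> -1 \<le> \<gamma> + (\<Sum>t\<in>B. e t) \<and> \<gamma> + (\<Sum>t\<in>B. e t) \<le> 1"
  proof -
    fix B assume "B \<in> JS X r"
    hence "g a b B = \<gamma> + (\<Sum>t\<in>B. e t)" using lin by blast
    moreover have "-1 \<le> g a b B \<and> g a b B \<le> 1" unfolding g_def using f01[of "insert a B"] f01[of "insert b B"] by auto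
    ultimately show "-1 \<le> \<gamma> + (\<Sum>t\<in>B. e t) \<and> \<gamma> + (\<Sum>t\<in>B. e t) \<le> 1" by simp
  qed
  have "(\<Sum>B\<in>JS X r. g a b B) = 0" using G_zero[OF a b ab] unfolding X_def r_def .
  hence "(\<Sum>B\<in>JS X r. \<gamma> + (\<Sum>t\<in>B. e t)) = 0" using lin by simp
  hence "\<gamma> * int (card (JS X r)) + (\<Sum>B\<in>JS X r. \<Sum>t\<in>B. e t) = 0" by (simp add: sum.distrib mult.commute)
  hence s0: "\<gamma> * int (m choose r) + int ((m - 1) choose (r - 1)) * (\<Sum>t\<in>X. e t) = 0"
    using count_sum[OF fX r1(1), of e] card_JS[OF fX, of r] unfolding m_def by simp
  have bin: "int r * int (m choose r) = int m * int ((m - 1) choose (r - 1))"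
    using times_binomial_minus1_eq[of r m] r1 by (simp flip: of_nat_mult)
  define S where "S = (\<Sum>t\<in>X. e t)"
  have x0: "int m * (\<gamma> * int (m choose r) + int ((m - 1) choose (r - 1)) * S) = 0" using s0 unfolding S_def by simp
  have x1: "int m * (\<gamma> * int (m choose r) + int ((m - 1) choose (r - 1)) * S)
     = int m * \<gamma> * int (m choose r) + (int m * int ((m - 1) choose (r - 1))) * S" by (simp add: algebra_simps)
  have x2: "int (m choose r) * (int m * \<gamma> + int r * S) = int m * \<gamma> * int (m choose r) + (int r * int (m choose r)) * S"
    by (simp add: algebra_simps)
  have x3: "(int r * int (m choose r)) * S = (int m * int ((m - 1) choose (r - 1))) * S" using bin by simp
  have "int (m choose r) * (int m * \<gamma> + int r * (\<Sum>t\<in>X. e t)) = 0"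
    using x0 x1 x2 x3 unfolding S_def by linarith
  moreover have "int (m choose r) \<noteq> 0" using big2 unfolding m_def by simp
  ultimately have zs: "int (card X) * \<gamma> + int r * (\<Sum>t\<in>X. e t) = 0" unfolding m_def by simp
  have B0X: "B0 \<in> JS X r" using B0 unfolding X_def r_def .
  have nz': "\<gamma> + (\<Sum>t\<in>B0. e t) \<noteq> 0" using lin B0X nz by simp
  obtain p p' where pp: "p \<in> X" "p' \<in> X" "p \<noteq> p'"
    "\<forall>B\<in>JS X r. \<gamma> + (\<Sum>t\<in>B. e t) = (if p \<in> B then 1 else 0) - (if p' \<in> B then 1 else 0)"
    using classify[OF fX r1(2) big2 vals zs B0X nz'] by blast
  thus ?thesis using lin unfolding X_def r_def by auto
qed

lemma FC_Quad:
  assumes a: "a \<in> N" and b: "b \<in> N" and ab: "a \<noteq> b"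
    and p: "p \<in> N - {a,b}" and p': "p' \<in> N - {a,b}" and pp: "p \<noteq> p'"
    and form: "\<forall>B\<in>JS (N - {a,b}) (w - 1). g a b B = (if p \<in> B then 1 else 0) - (if p' \<in> B then 1 else 0)"
  shows "Quad a b p p'"
  unfolding Quad_def
proof (intro conjI ballI)
  show "a \<in> N" "b \<in> N" "p \<in> N" "p' \<in> N" using a b p p' by auto
  show "distinct [a, b, p, p']" using ab p p' pp by auto
  fix C assume C: "C \<in> JS (N - {a, b, p, p'}) (w - 2)"
  have CX: "C \<subseteq> N - {a,b,p,p'}" "card C = w - 2" using C unfolding JS_def by auto
  have fC: "finite C" using CX finite_subset by blast
  have w2: "Suc (w - 2) = w - 1" using w4 by simp
  have nC: "p \<notin> C" "p' \<notin> C" using CX by auto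
  have B1: "insert p C \<in> JS (N - {a,b}) (w - 1)" using CX fC p w2 nC unfolding JS_def by auto
  have B2: "insert p' C \<in> JS (N - {a,b}) (w - 1)" using CX fC p' w2 nC unfolding JS_def by auto
  have "p' \<notin> insert p C" "p \<notin> insert p' C" using CX pp by auto
  hence g1: "g a b (insert p C) = 1" and g2: "g a b (insert p' C) = -1" using form B1 B2 by auto
  show "f (insert a (insert p C)) = 1" "f (insert b (insert p C)) = 0"
    using g1 f01[of "insert a (insert p C)"] f01[of "insert b (insert p C)"] unfolding g_def by auto
  show "f (insert b (insert p' C)) = 1" "f (insert a (insert p' C)) = 0"
    using g2 f01[of "insert a (insert p' C)"] f01[of "insert b (insert p' C)"] unfolding g_def by auto
qed

end



lemma JS_ins:
  assumes "D \<in> JS Y k" "finite D" "x \<notin> D" "insert x D \<subseteq> Y'"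
  shows "insert x D \<in> JS Y' (Suc k)"
  using assms unfolding JS_def by auto

context jg
begin

lemma Quad_sym1: assumes "Quad a b c' d" shows "Quad b a d c'"
proof -
  have e: "N - {b,a,d,c'} = N - {a,b,c',d}" by blast
  show ?thesis using assms unfolding Quad_def e by auto
qed

lemma Quad_sym2: assumes "Quad a b c' d" shows "Quad c' d a b"
proof -
  have e: "N - {c',d,a,b} = N - {a,b,c',d}" by blast
  have i1: "\<And>C. insert c' (insert a C) = insert a (insert c' C)" by blast
  have i2: "\<And>C. insert d (insert b C) = insert b (insert d C)" by blast
  have i3: "\<And>C. insert d (insert a C) = insert a (insert d C)" by blast
  have i4: "\<And>C. insert c' (insert b C) = insert b (insert c' C)" by blast
  show ?thesis using assms unfolding Quad_def e i1 i2 i3 i4 by auto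
qed

lemma Quad_N: "Quad a b c' d \<Longrightarrow> a \<in> N \<and> b \<in> N \<and> c' \<in> N \<and> d \<in> N \<and> a \<noteq> b \<and> a \<noteq> c' \<and> a \<noteq> d \<and> b \<noteq> c' \<and> b \<noteq> d \<and> c' \<noteq> d"
  unfolding Quad_def by auto

lemma Quad_at: "Quad a b c' d \<Longrightarrow> C \<in> JS (N - {a,b,c',d}) (w - 2) \<Longrightarrow>
   f (insert a (insert c' C)) = 1 \<and> f (insert b (insert d C)) = 1 \<and> f (insert b (insert c' C)) = 0 \<and> f (insert a (insert d C)) = 0"
  unfolding Quad_def by blast

lemma getD:
  assumes "Z \<subseteq> N" "card Z \<le> z" "k + z \<le> n"
  obtains D where "D \<subseteq> N - Z" "card D = k" "finite D"
proof -
  obtain D where "D \<in> JS (N - Z) k" using avoid_ex[OF assms] by blast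
  thus ?thesis using that unfolding JS_def using finite_subset by blast
qed

lemma L2:
  assumes Q1: "Quad a b c' d" and Q2: "Quad a' b' c'' d'" and disj: "{a,b,c',d} \<inter> {a',b',c'',d'} = {}"
  shows False
proof -
  note q1 = Quad_N[OF Q1] and q2 = Quad_N[OF Q2]
  have ZN: "{a,b,c',d,a',b',c'',d'} \<subseteq> N" using q1 q2 by auto
  have cz: "card {a,b,c',d,a',b',c'',d'} \<le> 8" using card_set_le[of "[a,b,c',d,a',b',c'',d']"] by simp
  obtain D where D: "D \<subseteq> N - {a,b,c',d,a',b',c'',d'}" "card D = w - 4" "finite D"
    using getD[OF ZN cz, of "w - 4"] w4 nbig by auto
  have ww: "Suc (Suc (w - 4)) = w - 2" using w4 by simp
  have nD: "a \<notin> D" "b \<notin> D" "c' \<notin> D" "d \<notin> D" "a' \<notin> D" "b' \<notin> D" "c'' \<notin> D" "d' \<notin> D" using D(1) by auto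
  have dis: "a' \<notin> {a,b,c',d}" "c'' \<notin> {a,b,c',d}" "b \<notin> {a',b',c'',d'}" "c' \<notin> {a',b',c'',d'}" using disj by auto
  have C: "insert a' (insert c'' D) \<in> JS (N - {a,b,c',d}) (w - 2)"
  proof -
    have "card (insert a' (insert c'' D)) = w - 2" using nD q2 D(2,3) ww by simp
    moreover have "insert a' (insert c'' D) \<subseteq> N - {a,b,c',d}" using D(1) q2 dis by auto
    ultimately show ?thesis unfolding JS_def by simp
  qed
  have C': "insert b (insert c' D) \<in> JS (N - {a',b',c'',d'}) (w - 2)"
  proof -
    have "card (insert b (insert c' D)) = w - 2" using nD q1 D(2,3) ww by simp
    moreover have "insert b (insert c' D) \<subseteq> N - {a',b',c'',d'}" using D(1) q1 dis by auto
    ultimately show ?thesis unfolding JS_def by simp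
  qed
  have "f (insert b (insert c' (insert a' (insert c'' D)))) = 0" using Quad_at[OF Q1 C] by blast
  moreover have "f (insert a' (insert c'' (insert b (insert c' D)))) = 1" using Quad_at[OF Q2 C'] by blast
  moreover have "insert b (insert c' (insert a' (insert c'' D))) = insert a' (insert c'' (insert b (insert c' D)))" by blast
  ultimately show False by simp
qed

lemma L1:
  assumes Q1: "Quad i j k l" and Q2: "Quad t u i q" and t: "t \<notin> {i,j,k,l}" and u: "u \<notin> {i,j,k,l}"
  shows False
proof -
  note q1 = Quad_N[OF Q1] and q2 = Quad_N[OF Q2]
  have ww: "Suc (w - 3) = w - 2" using w4 by simp
  show False
  proof (cases "q = k")
    case False
    have ZN: "{i,j,k,l,t,u,q} \<subseteq> N" using q1 q2 by auto
    have cz: "card {i,j,k,l,t,u,q} \<le> 7" using card_set_le[of "[i,j,k,l,t,u,q]"] by simp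
    obtain D where D: "D \<subseteq> N - {i,j,k,l,t,u,q}" "card D = w - 3" "finite D"
      using getD[OF ZN cz, of "w - 3"] w4 nbig by auto
    have nD: "i \<notin> D" "j \<notin> D" "k \<notin> D" "l \<notin> D" "t \<notin> D" "u \<notin> D" "q \<notin> D" using D(1) by auto
    have C: "insert u D \<in> JS (N - {i,j,k,l}) (w - 2)"
      using JS_ins[of D "N - {i,j,k,l,t,u,q}" "w - 3" u "N - {i,j,k,l}"] D nD u q2 ww unfolding JS_def by auto
    have C': "insert k D \<in> JS (N - {t,u,i,q}) (w - 2)"
      using JS_ins[of D "N - {i,j,k,l,t,u,q}" "w - 3" k "N - {t,u,i,q}"] D nD t u q1 False ww unfolding JS_def by auto
    have "f (insert i (insert k (insert u D))) = 1" using Quad_at[OF Q1 C] by blast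
    moreover have "f (insert u (insert i (insert k D))) = 0" using Quad_at[OF Q2 C'] by blast
    moreover have "insert i (insert k (insert u D)) = insert u (insert i (insert k D))" by blast
    ultimately show False by simp
  next
    case True
    have ZN: "{i,j,k,l,t,u} \<subseteq> N" using q1 q2 by auto
    have cz: "card {i,j,k,l,t,u} \<le> 6" using card_set_le[of "[i,j,k,l,t,u]"] by simp
    obtain D where D: "D \<subseteq> N - {i,j,k,l,t,u}" "card D = w - 3" "finite D"
      using getD[OF ZN cz, of "w - 3"] w4 nbig by auto
    have nD: "i \<notin> D" "j \<notin> D" "k \<notin> D" "l \<notin> D" "t \<notin> D" "u \<notin> D" using D(1) by auto
    have C: "insert u D \<in> JS (N - {i,j,k,l}) (w - 2)"
      using JS_ins[of D "N - {i,j,k,l,t,u}" "w - 3" u "N - {i,j,k,l}"] D nD u q2 ww unfolding JS_def by auto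
    have C': "insert j D \<in> JS (N - {t,u,i,q}) (w - 2)"
      using JS_ins[of D "N - {i,j,k,l,t,u}" "w - 3" j "N - {t,u,i,q}"] D nD t u q1 True ww unfolding JS_def by auto
    have "f (insert u (insert q (insert j D))) = 1" using Quad_at[OF Q2 C'] by blast
    moreover have "f (insert j (insert k (insert u D))) = 0" using Quad_at[OF Q1 C] by blast
    moreover have "insert u (insert q (insert j D)) = insert j (insert k (insert u D))" using True by blast
    ultimately show False by simp
  qed
qed

lemma E2b_aux:
  assumes Q1: "Quad i j k l" and Q2: "Quad t u p q" and t: "t \<notin> {i,j,k,l}" and u: "u \<notin> {i,j,k,l}"
    and p: "p \<in> {i,j,k,l}"
  shows False
proof -
  have "p = i \<or> p = j \<or> p = k \<or> p = l" using p by auto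
  thus False
  proof (elim disjE)
    assume "p = i" thus False using L1[OF Q1 _ t u] Q2 by simp
  next
    assume "p = j" thus False using L1[OF Quad_sym1[OF Q1], of t u q] Q2 t u by auto
  next
    assume "p = k" thus False using L1[OF Quad_sym2[OF Q1], of t u q] Q2 t u by auto
  next
    assume "p = l" thus False using L1[OF Quad_sym2[OF Quad_sym1[OF Q1]], of t u q] Q2 t u by auto
  qed
qed

lemma E2b:
  assumes Q1: "Quad i j k l" and Q2: "Quad t u p q" and t: "t \<notin> {i,j,k,l}" and u: "u \<notin> {i,j,k,l}"
  shows False
proof (cases "p \<in> {i,j,k,l}")
  case True thus False using E2b_aux[OF Q1 Q2 t u] by simp
next
  case False
  show False
  proof (cases "q \<in> {i,j,k,l}")
    case True thus False using E2b_aux[OF Q1 Quad_sym1[OF Q2] u t] by simp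
  next
    case False
    have "{i,j,k,l} \<inter> {t,u,p,q} = {}" using False \<open>p \<notin> {i,j,k,l}\<close> t u by auto
    thus False using L2[OF Q1 Q2] by simp
  qed
qed

end



context jg
begin

lemma nontwin_ex: "\<not> twin a b \<Longrightarrow> \<exists>B\<in>JS (N - {a,b}) (w - 1). g a b B \<noteq> 0"
  unfolding twin_def g_def by auto

lemma notR:
  assumes x: "x \<in> N" and t: "t \<in> N" and xt: "x \<noteq> t"
    and p: "p \<in> N - {x,t}" and p': "p' \<in> N - {x,t}" and pp: "p \<noteq> p'"
    and form: "\<forall>B\<in>JS (N - {x,t}) (w - 1). g x t B = (if p \<in> B then 1 else 0) - (if p' \<in> B then 1 else 0)"
    and z: "z \<in> {p,p'}" and z2: "z2 \<in> N" "z2 \<notin> {x,t,p,p'}" and tw: "twin z z2"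
  shows False
proof -
  have ZN: "{x,t,p,p',z2} \<subseteq> N" using x t p p' z2 by auto
  have cz: "card {x,t,p,p',z2} \<le> 5" using card_set_le[of "[x,t,p,p',z2]"] by simp
  obtain C where C: "C \<subseteq> N - {x,t,p,p',z2}" "card C = w - 2" "finite C"
    using getD[OF ZN cz, of "w - 2"] w4 nbig by auto
  have nC: "x \<notin> C" "t \<notin> C" "p \<notin> C" "p' \<notin> C" "z2 \<notin> C" using C(1) by auto
  have ww: "Suc (w - 2) = w - 1" using w4 by simp
  have zN: "z \<in> N - {x,t}" "z \<notin> C" "z \<noteq> z2" using z p p' nC z2 by auto
  have B: "insert z C \<in> JS (N - {x,t}) (w - 1)" using C zN ww unfolding JS_def by auto
  have B': "insert z2 C \<in> JS (N - {x,t}) (w - 1)" using C nC z2 ww unfolding JS_def by auto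
  have gB: "g x t (insert z C) \<noteq> 0" using form B z pp nC by auto
  have gB': "g x t (insert z2 C) = 0" using form B' z2 nC by auto
  have B0x: "insert x C \<in> JS (N - {z,z2}) (w - 1)" using C nC x zN z2 xt ww z p p' unfolding JS_def by auto
  have B0t: "insert t C \<in> JS (N - {z,z2}) (w - 1)" using C nC t zN z2 xt ww z p p' unfolding JS_def by auto
  have "f (insert z (insert x C)) = f (insert z2 (insert x C))" using tw B0x unfolding twin_def by blast
  moreover have "f (insert z (insert t C)) = f (insert z2 (insert t C))" using tw B0t unfolding twin_def by blast
  moreover have "insert z (insert x C) = insert x (insert z C)" "insert z2 (insert x C) = insert x (insert z2 C)"
    "insert z (insert t C) = insert t (insert z C)" "insert z2 (insert t C) = insert t (insert z2 C)" by blast+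
  ultimately have "g x t (insert z C) = g x t (insert z2 C)" unfolding g_def by simp
  thus False using gB gB' by simp
qed

lemma E2a:
  assumes Q1: "Quad i j k l" and alltw: "\<And>t u. t \<in> N - {i,j,k,l} \<Longrightarrow> u \<in> N - {i,j,k,l} \<Longrightarrow> t \<noteq> u \<Longrightarrow> twin t u"
  shows False
proof -
  note q1 = Quad_N[OF Q1]
  define R where "R = N - {i,j,k,l}"
  have cR: "card R = n - 4"
  proof -
    have "card R = card N - card {i,j,k,l}" unfolding R_def using q1 by (intro card_Diff_subset) auto
    moreover have "card {i,j,k,l} = 4" using q1 by (simp add: card_insert_if)
    ultimately show ?thesis by simp
  qed
  have fR: "finite R" unfolding R_def by simp
  have RN: "R \<subseteq> N" unfolding R_def by auto
  have pp_J: "\<exists>p p'. p \<in> N - {x,t} \<and> p' \<in> N - {x,t} \<and> p \<noteq> p' \<and> p \<notin> R \<and> p' \<notin> R \<and>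
      (\<forall>B\<in>JS (N - {x,t}) (w - 1). g x t B = (if p \<in> B then 1 else 0) - (if p' \<in> B then 1 else 0))"
    if x: "x \<in> {i,j,k,l}" and t: "t \<in> R" and nt: "\<not> twin x t" for x t
  proof -
    have xN: "x \<in> N" using x q1 by auto
    have tN: "t \<in> N" "x \<noteq> t" using t x unfolding R_def by auto
    obtain B0 where "B0 \<in> JS (N - {x,t}) (w - 1)" "g x t B0 \<noteq> 0" using nontwin_ex[OF nt] by blast
    then obtain p p' where pp: "p \<in> N - {x,t}" "p' \<in> N - {x,t}" "p \<noteq> p'"
      and form: "\<forall>B\<in>JS (N - {x,t}) (w - 1). g x t B = (if p \<in> B then 1 else 0) - (if p' \<in> B then 1 else 0)"
      using FC[OF xN tN(1) tN(2)] by blast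
    have notin: "z \<notin> R" if z: "z \<in> {p,p'}" for z
    proof
      assume zR: "z \<in> R"
      have "card {t,p,p'} \<le> 3" by (rule card3)
      have "card R - card {t,p,p'} \<le> card (R - {t,p,p'})" by (rule card_minus_le) simp
      hence "card (R - {t,p,p'}) > 0" using cR \<open>card {t,p,p'} \<le> 3\<close> w4 nbig by linarith
      hence "R - {t,p,p'} \<noteq> {}" by (intro notI) simp
      then obtain z2 where z2: "z2 \<in> R" "z2 \<notin> {t,p,p'}" by blast
      have z2x: "z2 \<noteq> x" using z2 x unfolding R_def by auto
      have "z \<noteq> z2" using z z2 by auto
      hence "twin z z2" using alltw zR z2 unfolding R_def by blast
      thus False using notR[OF xN tN(1) tN(2) pp form z, of z2] z2 z2x RN by auto
    qed
    show ?thesis using pp form notin by blast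
  qed
  have bR: "f (insert x B) = f (insert t B)"
    if x: "x \<in> {i,j,k,l}" and t: "t \<in> R" and B: "B \<in> JS (R - {t}) (w - 1)" for x t B
  proof -
    have BN: "B \<in> JS (N - {x,t}) (w - 1)" using B x unfolding JS_def R_def by auto
    show ?thesis
    proof (cases "twin x t")
      case True thus ?thesis using BN unfolding twin_def by blast
    next
      case False
      obtain p p' where pp: "p \<notin> R" "p' \<notin> R"
        and form: "\<forall>B\<in>JS (N - {x,t}) (w - 1). g x t B = (if p \<in> B then 1 else 0) - (if p' \<in> B then 1 else 0)"
        using pp_J[OF x t False] by blast
      have "p \<notin> B" "p' \<notin> B" using B pp unfolding JS_def by auto
      hence "g x t B = 0" using form BN by simp
      thus ?thesis unfolding g_def by simp
    qed
  qed
  have cRel: "f (insert x B) = f (insert y B)"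
    if x: "x \<in> {i,j,k,l}" and y: "y \<in> {i,j,k,l}" and B: "B \<in> JS R (w - 1)" for x y B
  proof -
    have BR: "B \<subseteq> R" "card B = w - 1" using B unfolding JS_def by auto
    have "card R - card B \<le> card (R - B)" using BR fR finite_subset by (intro card_minus_le) blast
    hence "card (R - B) > 0" using cR BR w4 nbig by linarith
    hence "R - B \<noteq> {}" by (intro notI) simp
    then obtain t where t: "t \<in> R" "t \<notin> B" by blast
    have B': "B \<in> JS (R - {t}) (w - 1)" using BR t unfolding JS_def by auto
    show ?thesis using bR[OF x t(1) B'] bR[OF y t(1) B'] by simp
  qed
  have tw: "twin x t" if x: "x \<in> {i,j,k,l}" and t: "t \<in> R" for x t
  proof (rule ccontr)
    assume nt: "\<not> twin x t"
    have xN: "x \<in> N" using x q1 by auto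
    have tN: "t \<in> N" "x \<noteq> t" using t x unfolding R_def by auto
    obtain p p' where pp: "p \<in> N - {x,t}" "p' \<in> N - {x,t}" "p \<noteq> p'" "p \<notin> R" "p' \<notin> R"
      and form: "\<forall>B\<in>JS (N - {x,t}) (w - 1). g x t B = (if p \<in> B then 1 else 0) - (if p' \<in> B then 1 else 0)"
      using pp_J[OF x t nt] by blast
    have pJ: "p \<in> {i,j,k,l}" "p' \<in> {i,j,k,l}" using pp unfolding R_def by auto
    have Q: "Quad x t p p'" using FC_Quad[OF xN tN(1) tN(2) pp(1) pp(2) pp(3) form] .
    have "card R - card {t} \<le> card (R - {t})" by (rule card_minus_le) simp
    hence "w - 2 \<le> card (R - {t})" using cR w4 nbig by simp
    then obtain C where C: "C \<subseteq> R - {t}" "card C = w - 2" "finite C" using sub_ex[of "R - {t}"] fR by blast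
    have CQ: "C \<in> JS (N - {x,t,p,p'}) (w - 2)" using C x pJ unfolding JS_def R_def by auto
    have "f (insert t (insert p' C)) = 1" "f (insert t (insert p C)) = 0" using Quad_at[OF Q CQ] by auto
    moreover have BR: "insert t C \<in> JS R (w - 1)"
    proof -
      have "t \<notin> C" using C by auto
      hence "card (insert t C) = w - 1" using C w4 by simp
      thus ?thesis using C t unfolding JS_def by auto
    qed
    have "f (insert p' (insert t C)) = f (insert p (insert t C))" using cRel[OF pJ(2) pJ(1) BR] .
    moreover have "insert p' (insert t C) = insert t (insert p' C)" "insert p (insert t C) = insert t (insert p C)" by blast+
    ultimately show False by simp
  qed
  have "card R > 0" using cR w4 nbig by simp
  hence "R \<noteq> {}" by (intro notI) simp
  then obtain t where t: "t \<in> R" by blast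
  have ti: "twin i t" and tj: "twin j t" using tw t by auto
  have "card R - card {t} \<le> card (R - {t})" by (rule card_minus_le) simp
  hence "w - 2 \<le> card (R - {t})" using cR w4 nbig by simp
  then obtain C where C: "C \<subseteq> R - {t}" "card C = w - 2" "finite C" using sub_ex[of "R - {t}"] fR by blast
  have CQ: "C \<in> JS (N - {i,j,k,l}) (w - 2)" using C unfolding JS_def R_def by auto
  have f1: "f (insert i (insert k C)) = 1" "f (insert j (insert k C)) = 0" using Quad_at[OF Q1 CQ] by auto
  have kC0: "k \<notin> C" using C unfolding R_def by auto
  have kC: "k \<notin> C" "card (insert k C) = w - 1" using kC0 C(2,3) w4 by simp_all
  have "insert k C \<in> JS (N - {i,t}) (w - 1)" using C kC q1 t unfolding JS_def R_def by auto
  hence "f (insert i (insert k C)) = f (insert t (insert k C))" using ti unfolding twin_def by blast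
  moreover have "insert k C \<in> JS (N - {j,t}) (w - 1)" using C kC q1 t unfolding JS_def R_def by auto
  hence "f (insert j (insert k C)) = f (insert t (insert k C))" using tj unfolding twin_def by blast
  ultimately show False using f1 by simp
qed

lemma final:
  assumes x: "x \<in> JS N w" and y: "y \<in> nb N w x" and fx: "f x = 1" and fy: "f y = 0"
  shows False
proof -
  obtain a b where ab: "a \<in> x" "b \<in> N" "b \<notin> x" "y = insert b (x - {a})"
    using nb_shape[OF _ x y] w4 by auto
  have xN: "x \<subseteq> N" "card x = w" using x unfolding JS_def by auto
  have aN: "a \<in> N" "a \<noteq> b" using ab xN by auto
  have fx': "finite x" using xN finite_subset by blast
  have B: "x - {a} \<in> JS (N - {a,b}) (w - 1)" using xN ab fx' unfolding JS_def by auto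
  have "insert a (x - {a}) = x" using ab by auto
  hence "g a b (x - {a}) = 1" unfolding g_def using fx fy ab by simp
  then obtain p p' where pp: "p \<in> N - {a,b}" "p' \<in> N - {a,b}" "p \<noteq> p'"
    and form: "\<forall>B\<in>JS (N - {a,b}) (w - 1). g a b B = (if p \<in> B then 1 else 0) - (if p' \<in> B then 1 else 0)"
    using FC[OF aN(1) ab(2) aN(2) B] by auto
  have Q: "Quad a b p p'" using FC_Quad[OF aN(1) ab(2) aN(2) pp form] .
  show False
  proof (cases "\<exists>t\<in>N - {a,b,p,p'}. \<exists>u\<in>N - {a,b,p,p'}. t \<noteq> u \<and> \<not> twin t u")
    case True
    then obtain t u where tu: "t \<in> N - {a,b,p,p'}" "u \<in> N - {a,b,p,p'}" "t \<noteq> u" "\<not> twin t u" by blast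
    obtain B0 where "B0 \<in> JS (N - {t,u}) (w - 1)" "g t u B0 \<noteq> 0" using nontwin_ex[OF tu(4)] by blast
    then obtain q q' where qq: "q \<in> N - {t,u}" "q' \<in> N - {t,u}" "q \<noteq> q'"
      and form2: "\<forall>B\<in>JS (N - {t,u}) (w - 1). g t u B = (if q \<in> B then 1 else 0) - (if q' \<in> B then 1 else 0)"
      using FC[of t u B0] tu by auto
    have Q2: "Quad t u q q'" using FC_Quad[of t u q q'] tu qq form2 by auto
    show False using E2b[OF Q Q2] tu by auto
  next
    case False
    thus False using E2a[OF Q] by blast
  qed
qed

end



lemma sum_ind_card_gen:
  assumes "finite M"
  shows "(\<Sum>Y\<in>M. if Y \<in> C then (1::int) else 0) = int (card {Y\<in>M. Y \<in> C})"
proof -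
  have "(\<Sum>Y\<in>M. if Y \<in> C then (1::int) else 0) = (\<Sum>Y\<in>{Y\<in>M. Y \<in> C}. 1)"
    by (rule sum.inter_filter[OF assms, symmetric])
  thus ?thesis by simp
qed

theorem theorem2:
  fixes n w b :: nat
  assumes "w > 3" and "n > 2 * w" and "n - 1 \<le> b" and "b \<le> 2 * n - 1"
  shows "\<not> (\<exists>C1 C2. equitable_2partition n w C1 C2
            (\<lambda>i j. if i = 1 then (if j = 1 then int (w * (n - w)) - int b else int b)
                   else (if j = 1 then 2 * int n - 2 - int b
                         else int (w * (n - w)) - 2 * int n + 2 + int b)))"
proof
  assume "\<exists>C1 C2. equitable_2partition n w C1 C2
            (\<lambda>i j. if i = 1 then (if j = 1 then int (w * (n - w)) - int b else int b)
                   else (if j = 1 then 2 * int n - 2 - int b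
                         else int (w * (n - w)) - 2 * int n + 2 + int b))"
  then obtain C1 C2 where eq: "equitable_2partition n w C1 C2
            (\<lambda>i j. if i = 1 then (if j = 1 then int (w * (n - w)) - int b else int b)
                   else (if j = 1 then 2 * int n - 2 - int b
                         else int (w * (n - w)) - 2 * int n + 2 + int b))" by blast
  have ne1: "C1 \<noteq> {}" and dis: "C1 \<inter> C2 = {}" and un: "C1 \<union> C2 = johnson_vertices n w"
    using eq unfolding equitable_2partition_def by auto
  have cnt: "\<And>i j x. i \<in> {1,2} \<Longrightarrow> j \<in> {1,2} \<Longrightarrow> x \<in> (if i = (1::nat) then C1 else C2) \<Longrightarrow>
      int (card {y \<in> (if j = (1::nat) then C1 else C2). johnson_adj w x y}) =
      (if i = 1 then (if j = 1 then int (w * (n - w)) - int b else int b)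
                   else (if j = 1 then 2 * int n - 2 - int b
                         else int (w * (n - w)) - 2 * int n + 2 + int b))"
    using eq unfolding equitable_2partition_def by blast
  have c11: "\<And>x. x \<in> C1 \<Longrightarrow> int (card {y \<in> C1. johnson_adj w x y}) = int (w * (n - w)) - int b"
    using cnt[of 1 1] by simp
  have c12: "\<And>x. x \<in> C1 \<Longrightarrow> int (card {y \<in> C2. johnson_adj w x y}) = int b"
    using cnt[of 1 2] by simp
  have c21: "\<And>x. x \<in> C2 \<Longrightarrow> int (card {y \<in> C1. johnson_adj w x y}) = 2 * int n - 2 - int b"
    using cnt[of 2 1] by simp
  have JV: "johnson_vertices n w = JS {0..<n} w" unfolding johnson_vertices_def JS_def by simp
  have nbV: "\<And>A. nb {0..<n} w A = {Y \<in> johnson_vertices n w. johnson_adj w A Y}"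
    unfolding nb_def JV johnson_adj_def by simp
  define f where "f A = (if A \<in> C1 then (1::int) else 0)" for A
  define c where "c = 2 * int n - 2 - int b"
  have C1V: "C1 \<subseteq> johnson_vertices n w" using un by auto
  have jg: "jg n w f c"
  proof
    show "4 \<le> w" using assms by simp
    show "2 * w + 1 \<le> n" using assms by simp
    show "\<And>A. f A = 0 \<or> f A = 1" unfolding f_def by simp
    fix A assume A: "A \<in> JS {0..<n} w"
    have fin: "finite (nb {0..<n} w A)" by (rule nb_finite) simp
    have "(\<Sum>Y\<in>nb {0..<n} w A. f Y) = int (card {Y \<in> nb {0..<n} w A. Y \<in> C1})"
      unfolding f_def using sum_ind_card_gen[OF fin] .
    also have "{Y \<in> nb {0..<n} w A. Y \<in> C1} = {y \<in> C1. johnson_adj w A y}" unfolding nbV using C1V by auto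
    finally have s: "(\<Sum>Y\<in>nb {0..<n} w A. f Y) = int (card {y \<in> C1. johnson_adj w A y})" .
    show "(\<Sum>Y\<in>nb {0..<n} w A. f Y) = c + (int (w * (n - w)) - 2 * int n + 2) * f A"
    proof (cases "A \<in> C1")
      case True thus ?thesis using s c11[OF True] unfolding f_def c_def by simp
    next
      case False
      hence "A \<in> C2" using A un unfolding JV by auto
      thus ?thesis using s c21 False unfolding f_def c_def by simp
    qed
  qed
  obtain x where x: "x \<in> C1" using ne1 by blast
  have "int (card {y \<in> C2. johnson_adj w x y}) \<ge> 1" using c12[OF x] assms by simp
  hence "{y \<in> C2. johnson_adj w x y} \<noteq> {}" by (intro notI) simp
  then obtain y where y: "y \<in> C2" "johnson_adj w x y" by blast
  have xJ: "x \<in> JS {0..<n} w" using x C1V unfolding JV by auto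
  have yV: "y \<in> johnson_vertices n w" using y un by auto
  have ynb: "y \<in> nb {0..<n} w x" unfolding nbV using yV y by simp
  have "f x = 1" "f y = 0" unfolding f_def using x y dis by auto
  thus False using jg.final[OF jg xJ ynb] by simp
qed


end
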